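(* Let $n\ge 2$ and let $\xi\in\mathbb{R}^n$ be such that there exist $C_\xi,\sigma>0$ with $|\xi\cdot k|\ge C_\xi|k|^{-(n+\sigma)}$ for all $k\in\mathbb{Z}^n\setminus\{0\}$. Let $G\in C^m(\mathbb{R}^n)$ be $\mathbb{Z}^n$-periodic with $m>2n+\sigma$ and $G>0$. For $c\in\mathbb{R}^n$ and $\varepsilon>0$ let $u^\varepsilon(t;c)$ and $v(\tau;c)$ be the unique solutions of $\dot u^\varepsilon=\xi/G(u^\varepsilon/\varepsilon)$, $u^\varepsilon(0)=c$, and $\dot v=\xi/G(v)$, $v(0)=c$. Then there is $C_0>0$ such that $v_i(\tau;c^2)-v_i(\tau;c^1)\le C_0$ for all $i\in\{1,\dots,n\}$, $\tau>0$, and all $c^1,c^2\in\mathbb{R}^n$ with $c^1-c^2\in[0,1]^n$. As a consequence, there exist $C>0$ and $\bar f\in\mathbb{R}^n$ depending only on $G$ and $\xi$ such that for all $t>0$, $\varepsilon>0$, $c\in\mathbb{R}^n$ and all $i$, \[|u^\varepsilon_i(t;c)-(c_i+\bar f_i t)|\le C\varepsilon.\] *)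

theory Defs
  imports "HOL-Analysis.Analysis"
begin

fun cont_diff :: "nat \<Rightarrow> (real^'n \<Rightarrow> real) \<Rightarrow> bool" where
  "cont_diff 0 f \<longleftrightarrow> continuous_on UNIV f"
| "cont_diff (Suc m) f \<longleftrightarrow>
     (\<exists>f'. (\<forall>x. (f has_derivative f' x) (at x)) \<and> (\<forall>v. cont_diff m (\<lambda>x. f' x v)))"

definition int_vec :: "real^'n \<Rightarrow> bool" where
  "int_vec k \<longleftrightarrow> (\<forall>i. k $ i \<in> \<int>)"

definition ode_sol :: "(real^'n \<Rightarrow> real^'n) \<Rightarrow> real^'n \<Rightarrow> (real \<Rightarrow> real^'n) \<Rightarrow> bool" where
  "ode_sol F c u \<longleftrightarrow> u 0 = c \<and>
     (\<forall>t\<ge>0. (u has_vector_derivative F (u t)) (at t within {0..}))"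

end

theory Submission
  imports Defs
begin

lemma cube_split_eq:
  fixes lo hi :: "real^'n"
  shows "cbox lo hi \<inter> {x. x \<bullet> axis j 1 \<le> c} = cbox lo (\<chi> i. if i = j then min (hi$j) c else hi$i)"
    and "cbox lo hi \<inter> {x. x \<bullet> axis j 1 \<ge> c} = cbox (\<chi> i. if i = j then max (lo$j) c else lo$i) hi"
proof -
  have A: "(\<forall>i. lo$i \<le> x$i \<and> x$i \<le> (if i = j then min (hi$j) c else hi$i)) \<longleftrightarrow>
        (\<forall>i. lo$i \<le> x$i \<and> x$i \<le> hi$i) \<and> x$j \<le> c" for x :: "real^'n"
  proof
    assume H: "\<forall>i. lo$i \<le> x$i \<and> x$i \<le> (if i = j then min (hi$j) c else hi$i)"
    have "lo$i \<le> x$i \<and> x$i \<le> hi$i" for i using H[rule_format, of i] by (cases "i = j") auto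
    moreover have "x$j \<le> c" using H[rule_format, of j] by simp
    ultimately show "(\<forall>i. lo$i \<le> x$i \<and> x$i \<le> hi$i) \<and> x$j \<le> c" by blast
  qed auto
  have B: "(\<forall>i. (if i = j then max (lo$j) c else lo$i) \<le> x$i \<and> x$i \<le> hi$i) \<longleftrightarrow>
        (\<forall>i. lo$i \<le> x$i \<and> x$i \<le> hi$i) \<and> c \<le> x$j" for x :: "real^'n"
  proof
    assume H: "\<forall>i. (if i = j then max (lo$j) c else lo$i) \<le> x$i \<and> x$i \<le> hi$i"
    have "lo$i \<le> x$i \<and> x$i \<le> hi$i" for i using H[rule_format, of i] by (cases "i = j") auto
    moreover have "c \<le> x$j" using H[rule_format, of j] by simp
    ultimately show "(\<forall>i. lo$i \<le> x$i \<and> x$i \<le> hi$i) \<and> c \<le> x$j" by blast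
  qed auto
  show "cbox lo hi \<inter> {x. x \<bullet> axis j 1 \<le> c} = cbox lo (\<chi> i. if i = j then min (hi$j) c else hi$i)"
    unfolding set_eq_iff mem_box_cart Int_iff mem_Collect_eq inner_axis using A by simp
  show "cbox lo hi \<inter> {x. x \<bullet> axis j 1 \<ge> c} = cbox (\<chi> i. if i = j then max (lo$j) c else lo$i) hi"
    unfolding set_eq_iff mem_box_cart Int_iff mem_Collect_eq inner_axis using B by simp
qed

lemma TI:
  fixes F :: "real^'n \<Rightarrow> 'b::banach"
  assumes cont: "continuous_on UNIV F" and per: "\<And>x. F (x + axis j 1) = F x"
    and h: "0 \<le> h" "h \<le> 1"
  shows "integral (cbox 0 1) (\<lambda>x. F (x + h *\<^sub>R axis j 1)) = integral (cbox 0 1) F"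
proof -
  let ?e = "axis j 1 :: real^'n"
  let ?a = "h *\<^sub>R ?e"
  have intg: "F integrable_on cbox lo hi" for lo hi
    by (rule integrable_continuous) (rule continuous_on_subset[OF cont], simp)
  have bas: "?e \<in> Basis" by (simp add: axis_in_Basis_iff)
  define Q1 where "Q1 = cbox (0::real^'n) (\<chi> i. if i = j then h else 1)"
  define Q2 where "Q2 = cbox (\<chi> i. if i = j then h else (0::real)) 1"
  define P2 where "P2 = cbox (\<chi> i. if i = j then 1 else (0::real)) (\<chi> i. if i = j then 1 + h else 1)"
  have s1: "integral (cbox 0 1) F = integral Q1 F + integral Q2 F"
    using integral_split[OF intg bas, of 0 1 h] h
    unfolding Q1_def Q2_def cube_split_eq
    apply (subgoal_tac "(\<chi> i. if i = j then min ((1::real^'n) $ j) h else (1::real^'n) $ i) = (\<chi> i. if i = j then h else 1)")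
    apply (subgoal_tac "(\<chi> i. if i = j then max ((0::real^'n) $ j) h else (0::real^'n) $ i) = (\<chi> i. if i = j then h else 0)")
    apply simp
    by (auto simp: vec_eq_iff)
  have s2: "integral (cbox ?a (1 + ?a)) F = integral Q2 F + integral P2 F"
    using integral_split[OF intg bas, of ?a "1 + ?a" 1] h
    unfolding Q2_def P2_def cube_split_eq
    apply (subgoal_tac "(\<chi> i. if i = j then min ((1 + ?a) $ j) 1 else (1 + ?a) $ i) = (1::real^'n)")
    apply (subgoal_tac "(\<chi> i. if i = j then max (?a $ j) 1 else ?a $ i) = (\<chi> i. if i = j then 1 else (0::real))")
    apply (subgoal_tac "(\<chi> i. if i = j then (1::real) + h else 1) = 1 + ?a")
    apply (subgoal_tac "(\<chi> i. if i = j then h else (0::real)) = ?a")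
    apply simp
    by (auto simp: vec_eq_iff axis_def)
  have s3: "integral P2 F = integral Q1 F"
  proof -
    have "integral P2 F = integral (cbox ((\<chi> i. if i = j then 1 else (0::real)) - ?e) ((\<chi> i. if i = j then 1 + h else 1) - ?e)) (\<lambda>x. F (x + ?e))"
      unfolding P2_def by (rule integral_shift_cbox[symmetric])
    also have "\<dots> = integral Q1 F"
    proof -
      have "(\<chi> i. if i = j then 1 else (0::real)) - ?e = 0"
        "(\<chi> i. if i = j then 1 + h else (1::real)) - ?e = (\<chi> i. if i = j then h else 1)"
        by (auto simp: vec_eq_iff axis_def)
      then show ?thesis unfolding Q1_def per by simp
    qed
    finally show ?thesis .
  qed
  have "integral (cbox 0 1) (\<lambda>x. F (x + ?a)) = integral (cbox (?a - ?a) (1 + ?a - ?a)) (\<lambda>x. F (x + ?a))"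
    by simp
  also have "\<dots> = integral (cbox ?a (1 + ?a)) F" by (rule integral_shift_cbox)
  finally show ?thesis using s1 s2 s3 by (simp add: add.commute)
qed

definition rv :: "int^'n \<Rightarrow> real^'n" where "rv k = (\<chi> i. of_int (k$i))"
definition ee :: "int^'n \<Rightarrow> real^'n \<Rightarrow> complex" where "ee k x = cis (2*pi*(rv k \<bullet> x))"
definition fc :: "(real^'n \<Rightarrow> complex) \<Rightarrow> int^'n \<Rightarrow> complex" where
  "fc F k = integral (cbox 0 1) (\<lambda>x. F x * ee (-k) x)"

lemma rv_add: "rv (k + l) = rv k + rv l" by (simp add: rv_def vec_eq_iff)
lemma rv_neg: "rv (-k) = - rv k" by (simp add: rv_def vec_eq_iff)
lemma rv_zero[simp]: "rv 0 = 0" by (simp add: rv_def vec_eq_iff)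
lemma rv_eq0: "rv k = 0 \<longleftrightarrow> k = 0" by (simp add: rv_def vec_eq_iff)
lemma int_vec_rv: "int_vec (rv k)" by (simp add: rv_def int_vec_def)

lemma ee_add_x: "ee k (x + y) = ee k x * ee k y"
  by (simp add: ee_def inner_add_right cis_mult distrib_left)
lemma ee_add_k: "ee (k + l) x = ee k x * ee l x"
  by (simp add: ee_def rv_add inner_add_left cis_mult distrib_left)
lemma ee_zero[simp]: "ee 0 x = 1" by (simp add: ee_def)
lemma norm_ee[simp]: "norm (ee k x) = 1" by (simp add: ee_def)
lemma ee_neg: "ee (-k) x = cnj (ee k x)"
  by (simp add: ee_def rv_neg cis_cnj)
lemma cont_ee: "continuous_on A (ee k)"
  unfolding ee_def by (intro continuous_intros)

lemma int_inner_int: "int_vec a \<Longrightarrow> int_vec b \<Longrightarrow> a \<bullet> b \<in> \<int>"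
  unfolding inner_vec_def int_vec_def by (intro Ints_sum Ints_mult) auto

lemma ee_int: "int_vec z \<Longrightarrow> ee k (x + z) = ee k x"
proof -
  assume z: "int_vec z"
  have "ee k z = 1" unfolding ee_def
    using int_inner_int[OF int_vec_rv z] by (metis cis_multiple_2pi mult.assoc)
  then show ?thesis by (simp add: ee_add_x)
qed

lemma int_vec_axis: "int_vec (axis j 1 :: real^'n)"
  by (simp add: int_vec_def axis_def)

lemma ee_half:
  assumes "k$j \<noteq> 0"
  shows "ee k (x + (1 / (2 * \<bar>real_of_int (k$j)\<bar>)) *\<^sub>R axis j 1) = - ee k x"
proof -
  have "ee k ((1 / (2 * \<bar>real_of_int (k$j)\<bar>)) *\<^sub>R axis j 1) = cis (2*pi*(of_int (k$j) / (2 * \<bar>real_of_int (k$j)\<bar>)))"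
    by (simp add: ee_def rv_def inner_axis)
  also have "\<dots> = -1"
  proof (cases "k$j > 0")
    case True then show ?thesis by simp
  next
    case False
    then have "of_int (k$j) / (2 * \<bar>real_of_int (k$j)\<bar>) = - 1/2" using assms by simp
    then show ?thesis by (simp add: cis_cnj[symmetric])
  qed
  finally show ?thesis by (simp add: ee_add_x)
qed

lemma content_cube: "Henstock_Kurzweil_Integration.content (cbox 0 (1::real^'n)) = 1"
proof -
  have "cbox 0 (1::real^'n) \<noteq> {}" by (auto simp: mem_box_cart set_eq_iff intro!: exI[of _ 0])
  then show ?thesis by (simp add: content_cbox_cart)
qed

lemma orth: "integral (cbox 0 1) (ee d) = (if d = 0 then 1 else 0)"
proof (cases "d = 0")
  case True
  have e0: "ee 0 = (\<lambda>x::real^'n. 1::complex)" by auto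
  have i1: "integral (cbox 0 (1::real^'n)) (\<lambda>x. 1::complex) = 1"
    using content_cube[where 'n='n] by (simp add: scaleR_conv_of_real)
  show ?thesis unfolding True e0 i1 by simp
next
  case False
  then obtain j where j: "d$j \<noteq> 0" by (metis vec_eq_iff zero_index)
  define h where "h = 1 / (2 * \<bar>real_of_int (d$j)\<bar>)"
  have h: "0 \<le> h" "h \<le> 1" using j by (auto simp: h_def field_simps)
  have "integral (cbox 0 1) (\<lambda>x. ee d (x + h *\<^sub>R axis j 1)) = integral (cbox 0 1) (ee d)"
    by (rule TI[OF cont_ee _ h]) (simp add: ee_int int_vec_axis)
  moreover have "integral (cbox 0 1) (\<lambda>x. ee d (x + h *\<^sub>R axis j 1)) = - integral (cbox 0 1) (ee d)"
    unfolding h_def ee_half[OF j] by simp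
  ultimately show ?thesis using False by simp
qed

lemma fc_shift:
  fixes F :: "real^'n \<Rightarrow> complex"
  assumes cont: "continuous_on UNIV F" and per: "\<And>x z. int_vec z \<Longrightarrow> F (x + z) = F x"
    and j: "k$j \<noteq> 0"
  shows "fc (\<lambda>x. F (x + (1 / (2 * \<bar>real_of_int (k$j)\<bar>)) *\<^sub>R axis j 1)) k = - fc F k"
proof -
  define h where "h = 1 / (2 * \<bar>real_of_int (k$j)\<bar>)"
  have h: "0 \<le> h" "h \<le> 1" using j by (auto simp: h_def field_simps)
  have j': "(-k)$j \<noteq> 0" using j by simp
  have "integral (cbox 0 1) (\<lambda>x. (\<lambda>y. F y * ee (-k) y) (x + h *\<^sub>R axis j 1)) = fc F k"
    unfolding fc_def
    by (rule TI) (auto intro!: continuous_intros cont_ee cont simp: per ee_int int_vec_axis h)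
  moreover have "(\<lambda>x. F (x + h *\<^sub>R axis j 1) * ee (-k) x) = (\<lambda>x. - ((\<lambda>y. F y * ee (-k) y) (x + h *\<^sub>R axis j 1)))"
    using ee_half[OF j'] by (simp add: h_def)
  ultimately show ?thesis unfolding fc_def h_def[symmetric] by (simp only: integral_neg)
qed

lemma fc_bound:
  assumes "continuous_on UNIV F" "\<And>x. x \<in> cbox 0 1 \<Longrightarrow> norm (F x) \<le> B"
  shows "norm (fc F k) \<le> B"
proof -
  have "0 \<in> cbox 0 (1::real^'n)" by (simp add: mem_box_cart)
  then have "0 \<le> B" using assms(2)[of 0] norm_ge_zero order_trans by blast
  have "(\<lambda>x. F x * ee (-k) x) integrable_on cbox 0 1"
    by (rule integrable_continuous) (auto intro!: continuous_intros cont_ee continuous_on_subset[OF assms(1)])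
  from has_integral_bound[OF \<open>0 \<le> B\<close> this[THEN integrable_integral]] assms(2)
  show ?thesis unfolding fc_def content_cube by (simp add: norm_mult)
qed

primrec fd :: "'n \<Rightarrow> nat \<Rightarrow> real \<Rightarrow> (real^'n \<Rightarrow> real) \<Rightarrow> real^'n \<Rightarrow> real" where
  "fd j 0 h F = F"
| "fd j (Suc m) h F = (\<lambda>x. fd j m h F (x + h *\<^sub>R axis j 1) - fd j m h F x)"

lemma fd_cont: "continuous_on UNIV F \<Longrightarrow> continuous_on UNIV (fd j m h F)"
proof (induction m)
  case 0 then show ?case by simp
next
  case (Suc m)
  have "continuous_on UNIV (\<lambda>x. fd j m h F (x + h *\<^sub>R axis j 1))"
    by (rule continuous_on_compose2[OF Suc.IH[OF Suc.prems]]) (auto intro!: continuous_intros)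
  then show ?case using Suc by (auto intro!: continuous_intros)
qed

lemma fd_per:
  assumes per: "\<And>x z. int_vec z \<Longrightarrow> F (x + z) = F x" and z: "int_vec z"
  shows "fd j m h F (x + z) = fd j m h F x"
proof (induction m arbitrary: x)
  case 0 then show ?case using per z by simp
next
  case (Suc m)
  have e: "x + z + h *\<^sub>R axis j 1 = (x + h *\<^sub>R axis j 1) + z" by (simp add: algebra_simps)
  have "fd j (Suc m) h F (x + z) = fd j m h F (x + z + h *\<^sub>R axis j 1) - fd j m h F (x + z)" by simp
  also have "\<dots> = fd j m h F ((x + h *\<^sub>R axis j 1) + z) - fd j m h F (x + z)" by (simp only: e)
  also have "\<dots> = fd j (Suc m) h F x" using Suc.IH[of "x + h *\<^sub>R axis j 1"] Suc.IH[of x] by simp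
  finally show ?case .
qed

lemma cont_diff_cont: assumes "cont_diff m F" shows "continuous_on UNIV F"
proof (cases m)
  case 0 then show ?thesis using assms by simp
next
  case (Suc m')
  from assms obtain F' where "\<forall>x. (F has_derivative F' x) (at x)" using Suc by auto
  then show ?thesis
    by (meson continuous_at_imp_continuous_on has_derivative_continuous)
qed

lemma line_deriv:
  assumes "\<And>y. (F has_derivative F' y) (at y)"
  shows "((\<lambda>t. F (x + t *\<^sub>R axis j 1)) has_real_derivative F' (x + t *\<^sub>R axis j 1) (axis j 1)) (at t)"
proof -
  have "((\<lambda>t. x + t *\<^sub>R axis j 1) has_derivative (\<lambda>s. s *\<^sub>R axis j 1)) (at t)"
    by (auto intro!: derivative_eq_intros)
  then have "((F \<circ> (\<lambda>t. x + t *\<^sub>R axis j 1)) has_derivative (F' (x + t *\<^sub>R axis j 1) \<circ> (\<lambda>s. s *\<^sub>R axis j 1))) (at t)"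
    by (rule diff_chain_at) (rule assms)
  moreover have "linear (F' (x + t *\<^sub>R axis j 1))" using assms has_derivative_linear by blast
  moreover have "(\<lambda>s. s * F' (x + t *\<^sub>R axis j 1) (axis j 1)) = (*) (F' (x + t *\<^sub>R axis j 1) (axis j 1))"
    by (auto simp: mult.commute)
  ultimately show ?thesis
    unfolding has_field_derivative_def by (simp add: o_def linear_scale)
qed

lemma fd_deriv:
  assumes "\<And>y. (F has_derivative F' y) (at y)"
  shows "((\<lambda>t. fd j m h F (x + t *\<^sub>R axis j 1)) has_real_derivative
           fd j m h (\<lambda>y. F' y (axis j 1)) (x + t *\<^sub>R axis j 1)) (at t)"
proof (induction m arbitrary: x)
  case 0 then show ?case using line_deriv[OF assms] by simp
next
  case (Suc m)
  have e: "x + t *\<^sub>R axis j 1 + h *\<^sub>R axis j 1 = (x + h *\<^sub>R axis j 1) + t *\<^sub>R axis j 1" for t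
    by (simp add: algebra_simps)
  show ?case unfolding fd.simps e
    by (rule DERIV_diff[OF Suc.IH[of "x + h *\<^sub>R axis j 1"] Suc.IH[of x]])
qed

lemma fd_bound:
  assumes "cont_diff m F" "compact K"
  shows "\<exists>B. \<forall>h x. 0 \<le> h \<longrightarrow> h \<le> 1 \<longrightarrow> x \<in> K \<longrightarrow> \<bar>fd j m h F x\<bar> \<le> B * h ^ m"
  using assms
proof (induction m arbitrary: F K)
  case 0
  then have "compact (F ` K)"
    by (intro compact_continuous_image) (auto intro: continuous_on_subset)
  then obtain B where "\<forall>y\<in>F ` K. norm y \<le> B" using compact_imp_bounded bounded_iff by metis
  then show ?case by auto
next
  case (Suc m)
  from Suc.prems obtain F' where F': "\<And>x. (F has_derivative F' x) (at x)"
    and c: "\<And>v. cont_diff m (\<lambda>x. F' x v)" by auto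
  define K' where "K' = (\<lambda>p. fst p + snd p *\<^sub>R axis j 1) ` (K \<times> {0..1::real})"
  have "compact K'" unfolding K'_def
    by (intro compact_continuous_image compact_Times Suc.prems) (auto intro!: continuous_intros)
  from Suc.IH[OF c this] obtain B where
    B: "\<And>h x. 0 \<le> h \<Longrightarrow> h \<le> 1 \<Longrightarrow> x \<in> K' \<Longrightarrow> \<bar>fd j m h (\<lambda>y. F' y (axis j 1)) x\<bar> \<le> B * h ^ m"
    by blast
  have "\<bar>fd j (Suc m) h F x\<bar> \<le> B * h ^ Suc m" if h: "0 \<le> h" "h \<le> 1" and x: "x \<in> K" for h x
  proof (cases "h = 0")
    case True then show ?thesis by simp
  next
    case False
    with h have "0 < h" by simp
    define g where "g t = fd j m h F (x + t *\<^sub>R axis j 1)" for t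
    have "\<And>t. 0 \<le> t \<Longrightarrow> t \<le> h \<Longrightarrow> (g has_real_derivative fd j m h (\<lambda>y. F' y (axis j 1)) (x + t *\<^sub>R axis j 1)) (at t)"
      unfolding g_def using fd_deriv[OF F'] by blast
    from MVT2[OF \<open>0 < h\<close> this] obtain z where z: "0 < z" "z < h"
      and eq: "g h - g 0 = (h - 0) * fd j m h (\<lambda>y. F' y (axis j 1)) (x + z *\<^sub>R axis j 1)" by blast
    have "x + z *\<^sub>R axis j 1 \<in> K'" unfolding K'_def using x z h
      by (intro image_eqI[of _ _ "(x, z)"]) auto
    from B[OF h this] have "\<bar>fd j m h (\<lambda>y. F' y (axis j 1)) (x + z *\<^sub>R axis j 1)\<bar> \<le> B * h ^ m" .
    moreover have "fd j (Suc m) h F x = g h - g 0" by (simp add: g_def)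
    ultimately show ?thesis using eq \<open>0 < h\<close>
      by (simp add: abs_mult mult_left_mono mult.left_commute)
  qed
  then show ?case by blast
qed

lemma fc_diff:
  assumes "continuous_on UNIV F" "continuous_on UNIV G"
  shows "fc (\<lambda>x. F x - G x) k = fc F k - fc G k"
proof -
  have "(\<lambda>x. F x * ee (-k) x) integrable_on cbox 0 1" "(\<lambda>x. G x * ee (-k) x) integrable_on cbox 0 1"
    by (rule integrable_continuous; auto intro!: continuous_intros cont_ee continuous_on_subset[OF assms(1)] continuous_on_subset[OF assms(2)])+
  then show ?thesis unfolding fc_def by (simp add: left_diff_distrib integral_diff)
qed

lemma fc_fd:
  fixes G :: "real^'n \<Rightarrow> real"
  assumes cont: "continuous_on UNIV G" and per: "\<And>x z. int_vec z \<Longrightarrow> G (x + z) = G x"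
    and j: "k$j \<noteq> 0"
  shows "fc (\<lambda>x. of_real (fd j m (1 / (2 * \<bar>real_of_int (k$j)\<bar>)) G x)) k = (-2)^m * fc (\<lambda>x. of_real (G x)) k"
proof (induction m)
  case 0 then show ?case by simp
next
  case (Suc m)
  define h where "h = 1 / (2 * \<bar>real_of_int (k$j)\<bar>)"
  let ?A = "\<lambda>x. complex_of_real (fd j m h G x)"
  have cA: "continuous_on UNIV ?A"
    by (intro continuous_on_compose2[OF continuous_on_of_real fd_cont[OF cont]]) auto
  have pA: "?A (x + z) = ?A x" if "int_vec z" for x z using fd_per[OF per that] by simp
  have cA': "continuous_on UNIV (\<lambda>x. ?A (x + h *\<^sub>R axis j 1))"
    by (rule continuous_on_compose2[OF cA]) (auto intro!: continuous_intros)
  have "fc (\<lambda>x. of_real (fd j (Suc m) h G x)) k = fc (\<lambda>x. ?A (x + h *\<^sub>R axis j 1) - ?A x) k"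
    by simp
  also have "\<dots> = fc (\<lambda>x. ?A (x + h *\<^sub>R axis j 1)) k - fc ?A k"
    by (rule fc_diff[OF cA' cA])
  also have "fc (\<lambda>x. ?A (x + h *\<^sub>R axis j 1)) k = - fc ?A k"
    using fc_shift[OF cA pA j] by (simp add: h_def)
  finally show ?case using Suc.IH unfolding h_def by simp
qed

lemma decay:
  fixes G :: "real^'n \<Rightarrow> real"
  assumes cd: "cont_diff m G" and per: "\<And>x z. int_vec z \<Longrightarrow> G (x + z) = G x"
  shows "\<exists>B. \<forall>k j. k$j \<noteq> 0 \<longrightarrow> norm (fc (\<lambda>x. of_real (G x)) k) \<le> B * (1 / (4 * \<bar>real_of_int (k$j)\<bar>)) ^ m"
proof -
  have cont: "continuous_on UNIV G" using cont_diff_cont[OF cd] .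
  have "\<exists>B. \<forall>h x. 0 \<le> h \<longrightarrow> h \<le> 1 \<longrightarrow> x \<in> cbox 0 1 \<longrightarrow> \<bar>fd j m h G x\<bar> \<le> B * h ^ m" for j
    by (rule fd_bound[OF cd compact_cbox])
  then obtain B where B: "\<And>j h x. 0 \<le> h \<Longrightarrow> h \<le> 1 \<Longrightarrow> x \<in> cbox 0 1 \<Longrightarrow> \<bar>fd j m h G x\<bar> \<le> B j * h ^ m"
    by metis
  define B0 where "B0 = Max (range B)"
  have "norm (fc (\<lambda>x. of_real (G x)) k) \<le> B0 * (1 / (4 * \<bar>real_of_int (k$j)\<bar>)) ^ m" if j: "k$j \<noteq> 0" for k j
  proof -
    define h where "h = 1 / (2 * \<bar>real_of_int (k$j)\<bar>)"
    have h: "0 \<le> h" "h \<le> 1" using j by (auto simp: h_def field_simps)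
    have cfd: "continuous_on UNIV (\<lambda>x. complex_of_real (fd j m h G x))"
      by (intro continuous_on_compose2[OF continuous_on_of_real fd_cont[OF cont]]) auto
    have "norm (fc (\<lambda>x. of_real (fd j m h G x)) k) \<le> B j * h ^ m"
      by (rule fc_bound[OF cfd]) (auto intro!: B h)
    also have "\<dots> \<le> B0 * h ^ m" unfolding B0_def
      by (intro mult_right_mono) (auto simp: h)
    finally have "2 ^ m * norm (fc (\<lambda>x. of_real (G x)) k) \<le> B0 * h ^ m"
      using fc_fd[OF cont per j, of m] unfolding h_def by (simp add: norm_mult norm_power)
    then have "norm (fc (\<lambda>x. of_real (G x)) k) \<le> B0 * h ^ m / 2 ^ m"
      by (simp add: field_simps)
    also have "\<dots> = B0 * (1 / (4 * \<bar>real_of_int (k$j)\<bar>)) ^ m"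
    proof -
      have "(2::real)^m * 2^m = 4^m" by (simp flip: power_mult_distrib)
      then show ?thesis unfolding h_def by (simp add: power_divide field_simps power_mult_distrib)
    qed
    finally show ?thesis .
  qed
  then show ?thesis by blast
qed

definition BB :: "nat \<Rightarrow> (int^'n) set" where "BB N = {k. \<forall>i. \<bar>k$i\<bar> \<le> int N}"

lemma absI: "\<bar>x::int\<bar> \<le> n \<longleftrightarrow> -n \<le> x \<and> x \<le> n" by arith

lemma BB_eq: "BB N = (\<lambda>f. vec_lambda f) ` (PiE UNIV (\<lambda>_. {- int N..int N}))"
proof
  show "BB N \<subseteq> (\<lambda>f. vec_lambda f) ` (PiE UNIV (\<lambda>_. {- int N..int N}))"
  proof
    fix k assume "k \<in> BB N"
    then have "(\<lambda>i. k$i) \<in> PiE UNIV (\<lambda>_. {- int N..int N})" by (auto simp: BB_def absI)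
    then show "k \<in> (\<lambda>f. vec_lambda f) ` (PiE UNIV (\<lambda>_. {- int N..int N}))"
      by (intro image_eqI[of _ _ "\<lambda>i. k$i"]) auto
  qed
qed (auto simp: BB_def absI PiE_iff)

lemma finite_BB: "finite (BB N)"
  unfolding BB_eq by (intro finite_imageI finite_PiE) auto

lemma card_BB: "card (BB N :: (int^'n) set) = (2 * N + 1) ^ CARD('n)"
proof -
  have "inj_on (\<lambda>f. vec_lambda f :: int^'n) (PiE UNIV (\<lambda>_. {- int N..int N}))"
    by (auto simp: inj_on_def vec_lambda_inject)
  then have "card (BB N :: (int^'n) set) = card (PiE (UNIV::'n set) (\<lambda>_. {- int N..int N}))"
    unfolding BB_eq by (rule card_image)
  also have "\<dots> = (2 * N + 1) ^ CARD('n)" by (simp add: card_PiE nat_add_distrib nat_mult_distrib)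
  finally show ?thesis .
qed

lemma BB_mono: "N \<le> M \<Longrightarrow> BB N \<subseteq> BB M"
  unfolding BB_def by (auto intro: order_trans[OF _ iffD2[OF of_nat_le_iff]])
lemma BB_0: "BB 0 = {0}" by (auto simp: BB_def vec_eq_iff)
lemma zero_BB: "0 \<in> BB N" by (auto simp: BB_def)

lemma pow_diff_le:
  fixes a b :: real
  assumes "0 \<le> b" "b \<le> a"
  shows "a ^ Suc n - b ^ Suc n \<le> real (Suc n) * a ^ n * (a - b)"
proof (induction n)
  case 0 then show ?case by simp
next
  case (Suc n)
  have "a ^ Suc (Suc n) - b ^ Suc (Suc n) = a * (a ^ Suc n - b ^ Suc n) + b ^ Suc n * (a - b)"
    by (simp add: algebra_simps)
  also have "\<dots> \<le> a * (real (Suc n) * a ^ n * (a - b)) + a ^ Suc n * (a - b)"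
    using assms Suc by (intro add_mono mult_left_mono mult_right_mono power_mono) auto
  also have "\<dots> = real (Suc (Suc n)) * a ^ Suc n * (a - b)" by (simp add: algebra_simps)
  finally show ?case .
qed

lemma shell_card:
  assumes "1 \<le> s"
  shows "real (card (BB s :: (int^'n) set)) - real (card (BB (s - 1) :: (int^'n) set))
          \<le> 2 * CARD('n) * 3 ^ (CARD('n) - 1) * real s ^ (CARD('n) - 1)"
proof -
  define n where "n = CARD('n) - 1"
  have n: "CARD('n) = Suc n" unfolding n_def using card_gt_0_iff[of "UNIV::'n set"] by simp
  have "real (card (BB s :: (int^'n) set)) - real (card (BB (s - 1) :: (int^'n) set))
        = (2 * real s + 1) ^ Suc n - (2 * real s - 1) ^ Suc n"
  proof -
    have "real (2 * (s - 1) + 1) = 2 * real s - 1" using assms by (simp add: of_nat_diff)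
    then show ?thesis unfolding card_BB n of_nat_power by (simp add: add.commute)
  qed
  also have "\<dots> \<le> real (Suc n) * (2 * real s + 1) ^ n * 2"
    using pow_diff_le[of "2 * real s - 1" "2 * real s + 1" n] assms by simp
  also have "\<dots> \<le> real (Suc n) * (3 * real s) ^ n * 2"
    using assms by (intro mult_right_mono mult_left_mono power_mono) auto
  finally show ?thesis unfolding n by (simp add: power_mult_distrib algebra_simps n_def[symmetric])
qed

lemma lattice_sum:
  fixes f :: "int^'n \<Rightarrow> real"
  assumes p: "p > real CARD('n)"
    and fb: "\<And>k j. k \<noteq> 0 \<Longrightarrow> (\<forall>i. \<bar>k$i\<bar> \<le> \<bar>k$j\<bar>) \<Longrightarrow> 0 \<le> f k \<and> f k \<le> A * real_of_int \<bar>k$j\<bar> powr (- p)"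
  shows "\<exists>L. \<forall>N. (\<Sum>k\<in>BB N - {0}. f k) \<le> L"
proof -
  define c where "c = 2 * CARD('n) * 3 ^ (CARD('n) - 1) * A"
  define q where "q = real (CARD('n) - 1) - p"
  have q: "q < -1" using p unfolding q_def by (simp add: of_nat_diff)
  have A: "A \<ge> 0"
  proof -
    let ?k = "(\<chi> i. 1) :: int^'n"
    have "?k \<noteq> 0" by (simp add: vec_eq_iff)
    from fb[OF this, of undefined] have "0 \<le> A * 1 powr (-p)" by auto
    then show ?thesis by simp
  qed
  have summ: "summable (\<lambda>s. real s powr q)" using q summable_real_powr_iff by blast
  define D where "D s = (real (card (BB s :: (int^'n) set)) - real (card (BB (s - 1) :: (int^'n) set))) * (A * real s powr (-p))" for s
  have shell: "(\<Sum>k\<in>BB s - BB (s - 1). f k) \<le> D s" if s: "1 \<le> s" for s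
  proof -
    have bnd: "f k \<le> A * real s powr (-p)" if k: "k \<in> BB s - BB (s - 1)" for k :: "int^'n"
    proof -
      have fin: "finite (range (\<lambda>i. \<bar>k$i\<bar>))" by simp
      have "Max (range (\<lambda>i. \<bar>k$i\<bar>)) \<in> range (\<lambda>i. \<bar>k$i\<bar>)" by (rule Max_in[OF fin]) simp
      then obtain j where j: "\<bar>k$j\<bar> = Max (range (\<lambda>i. \<bar>k$i\<bar>))" by (metis rangeE)
      have jmax: "\<forall>i. \<bar>k$i\<bar> \<le> \<bar>k$j\<bar>" unfolding j using fin by auto
      have "\<bar>k$j\<bar> = int s"
      proof -
        have "\<bar>k$j\<bar> \<le> int s" using k by (auto simp: BB_def)
        moreover have "\<not> \<bar>k$j\<bar> \<le> int (s - 1)" using k jmax by (auto simp: BB_def) (meson order_trans)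
        ultimately show ?thesis using s by linarith
      qed
      moreover have "k \<noteq> 0" using k s zero_BB by auto
      ultimately show "f k \<le> A * real s powr (-p)" using fb[OF _ jmax] by auto
    qed
    have "(\<Sum>k\<in>BB s - BB (s - 1). f k) \<le> of_nat (card (BB s - BB (s - 1) :: (int^'n) set)) * (A * real s powr (-p))"
      using bnd by (rule sum_bounded_above)
    also have "of_nat (card (BB s - BB (s - 1) :: (int^'n) set)) = real (card (BB s :: (int^'n) set)) - real (card (BB (s - 1) :: (int^'n) set))"
    proof -
      have "card (BB (s-1) :: (int^'n) set) \<le> card (BB s :: (int^'n) set)" by (rule card_mono[OF finite_BB BB_mono]) simp
      moreover have "card (BB s - BB (s-1) :: (int^'n) set) = card (BB s :: (int^'n) set) - card (BB (s-1) :: (int^'n) set)"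
        by (rule card_Diff_subset[OF finite_BB BB_mono]) simp
      ultimately show ?thesis by (simp add: of_nat_diff)
    qed
    finally show ?thesis unfolding D_def .
  qed
  have Dle: "D s \<le> c * real s powr q" if s: "1 \<le> s" for s
  proof -
    have "D s \<le> (2 * CARD('n) * 3 ^ (CARD('n) - 1) * real s ^ (CARD('n) - 1)) * (A * real s powr (-p))"
      unfolding D_def using shell_card[OF s, where 'n='n] A by (intro mult_right_mono) auto
    also have "\<dots> = c * (real s ^ (CARD('n) - 1) * real s powr (-p))" by (simp add: c_def algebra_simps)
    also have "real s ^ (CARD('n) - 1) * real s powr (-p) = real s powr q"
      using s by (simp add: q_def powr_realpow[symmetric] powr_add[symmetric])
    finally show ?thesis .
  qed
  have f0: "f k \<ge> 0" if "k \<noteq> 0" for k :: "int^'n"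
  proof -
    have fin: "finite (range (\<lambda>i. \<bar>k$i\<bar>))" by simp
    have "Max (range (\<lambda>i. \<bar>k$i\<bar>)) \<in> range (\<lambda>i. \<bar>k$i\<bar>)" by (rule Max_in[OF fin]) simp
    then obtain j where j: "\<bar>k$j\<bar> = Max (range (\<lambda>i. \<bar>k$i\<bar>))" by (metis rangeE)
    have jmax: "\<forall>i. \<bar>k$i\<bar> \<le> \<bar>k$j\<bar>" unfolding j using fin by auto
    show ?thesis using fb[OF that jmax] by simp
  qed
  have main: "(\<Sum>k\<in>BB N - {0}. f k) \<le> c * (\<Sum>s\<in>{1..N}. real s powr q)" for N
  proof (induction N)
    case 0 then show ?case by (simp add: BB_0)
  next
    case (Suc N)
    have eq: "BB (Suc N) - {0} = (BB N - {0}) \<union> (BB (Suc N) - BB N)"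
      using BB_mono[of N "Suc N"] zero_BB[of N] by auto
    have "(\<Sum>k\<in>BB (Suc N) - {0}. f k) = (\<Sum>k\<in>BB N - {0}. f k) + (\<Sum>k\<in>BB (Suc N) - BB N. f k)"
      unfolding eq by (rule sum.union_disjoint) (auto intro: finite_BB)
    also have "\<dots> \<le> c * (\<Sum>s\<in>{1..N}. real s powr q) + c * real (Suc N) powr q"
      using Suc.IH shell[of "Suc N"] Dle[of "Suc N"] by simp
    also have "\<dots> = c * (\<Sum>s\<in>{1..Suc N}. real s powr q)" by (simp add: algebra_simps)
    finally show ?case .
  qed
  have c0: "c \<ge> 0" using A by (simp add: c_def)
  have "(\<Sum>s\<in>{1..N}. real s powr q) \<le> suminf (\<lambda>s. real s powr q)" for N
    by (rule sum_le_suminf[OF summ]) auto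
  then have "(\<Sum>k\<in>BB N - {0}. f k) \<le> c * suminf (\<lambda>s. real s powr q)" for N
    using main[of N] c0 by (meson mult_left_mono order_trans)
  then show ?thesis by blast
qed

inductive tp :: "(real^'n \<Rightarrow> complex) \<Rightarrow> bool" where
  tp0: "tp (\<lambda>x. 0)"
| tpS: "tp q \<Longrightarrow> tp (\<lambda>x. a * ee k x + q x)"

lemma tp_add: "tp p \<Longrightarrow> tp q \<Longrightarrow> tp (\<lambda>x. p x + q x)"
proof (induction rule: tp.induct)
  case tp0 then show ?case by simp
next
  case (tpS p a k)
  then show ?case using tp.tpS[OF tpS.IH[OF tpS.prems], of a k] by (simp add: add.assoc)
qed

lemma tp_cmul: "tp q \<Longrightarrow> tp (\<lambda>x. c * q x)"
proof (induction rule: tp.induct)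
  case tp0 then show ?case by (simp add: tp.tp0)
next
  case (tpS q a k)
  then show ?case using tp.tpS[OF tpS.IH, of "c * a" k] by (simp add: algebra_simps)
qed

lemma tp_mul_ee: "tp q \<Longrightarrow> tp (\<lambda>x. ee l x * q x)"
proof (induction rule: tp.induct)
  case tp0 then show ?case by (simp add: tp.tp0)
next
  case (tpS q a k)
  then show ?case using tp.tpS[OF tpS.IH, of a "l + k"] by (simp add: algebra_simps ee_add_k)
qed

lemma tp_mult: "tp p \<Longrightarrow> tp q \<Longrightarrow> tp (\<lambda>x. p x * q x)"
proof (induction rule: tp.induct)
  case tp0 then show ?case by (simp add: tp.tp0)
next
  case (tpS p a k)
  have "tp (\<lambda>x. a * (ee k x * q x) + p x * q x)"
    by (rule tp_add[OF tp_cmul[OF tp_mul_ee[OF tpS.prems]] tpS.IH[OF tpS.prems]])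
  then show ?case by (simp add: algebra_simps)
qed

lemma tp_const: "tp (\<lambda>x. c)"
  using tp.tpS[OF tp.tp0, of c 0] by simp

lemma tp_sum: "finite S \<Longrightarrow> (\<And>i. i \<in> S \<Longrightarrow> tp (f i)) \<Longrightarrow> tp (\<lambda>x. \<Sum>i\<in>S. f i x)"
  by (induction rule: finite_induct) (auto intro: tp_add tp.tp0)

lemma tp_cont: "tp q \<Longrightarrow> continuous_on UNIV q"
  by (induction rule: tp.induct) (auto intro!: continuous_intros cont_ee)

definition iax :: "'n \<Rightarrow> int^'n" where "iax j = (\<chi> i. if i = j then 1 else 0)"

lemma ee_iax: "ee (iax j) x = cis (2 * pi * x$j)" "ee (- iax j) x = cis (- (2 * pi * x$j))"
proof -
  have "rv (iax j) = axis j 1" by (simp add: rv_def iax_def axis_def vec_eq_iff)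
  then show "ee (iax j) x = cis (2 * pi * x$j)" "ee (- iax j) x = cis (- (2 * pi * x$j))"
    by (simp_all add: ee_def rv_neg inner_axis')
qed

lemma tp_cos: "tp (\<lambda>x. complex_of_real (cos (2 * pi * x$j)))"
proof -
  have "tp (\<lambda>x. (1/2) * ee (iax j) x + ((1/2) * ee (- iax j) x + 0))"
    by (intro tp.tpS tp.tp0)
  moreover have "(1/2) * ee (iax j) x + ((1/2) * ee (- iax j) x + 0) = complex_of_real (cos (2 * pi * x$j))" for x
    unfolding ee_iax by (simp add: complex_eq_iff cis.sel)
  ultimately show ?thesis by simp
qed

lemma tp_sin: "tp (\<lambda>x. complex_of_real (sin (2 * pi * x$j)))"
proof -
  have "tp (\<lambda>x. (- \<i>/2) * ee (iax j) x + ((\<i>/2) * ee (- iax j) x + 0))"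
    by (intro tp.tpS tp.tp0)
  moreover have "(- \<i>/2) * ee (iax j) x + ((\<i>/2) * ee (- iax j) x + 0) = complex_of_real (sin (2 * pi * x$j))" for x
    unfolding ee_iax by (simp add: complex_eq_iff cis.sel)
  ultimately show ?thesis by simp
qed

definition EE :: "real^'n \<Rightarrow> (real^'n) \<times> (real^'n)" where
  "EE x = ((\<chi> j. cos (2 * pi * x$j)), (\<chi> j. sin (2 * pi * x$j)))"

lemma tp_linear:
  assumes "bounded_linear (g :: (real^'n) \<times> (real^'n) \<Rightarrow> real)"
  shows "tp (\<lambda>x. complex_of_real (g (EE x)))"
proof -
  have lin: "linear g" using assms bounded_linear.linear by blast
  have exp: "g (a, b) = (\<Sum>j\<in>UNIV. a$j * g (axis j 1, 0)) + (\<Sum>j\<in>UNIV. b$j * g (0, axis j 1))" for a b :: "real^'n"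
  proof -
    have "(a, b) = (\<Sum>j\<in>UNIV. a$j *\<^sub>R (axis j 1, 0)) + (\<Sum>j\<in>UNIV. b$j *\<^sub>R (0, axis j 1))"
    proof -
      have "(\<Sum>j\<in>UNIV. a$j *\<^sub>R ((axis j 1 :: real^'n), (0::real^'n))) = (\<Sum>j\<in>UNIV. a$j *\<^sub>R axis j 1, 0)"
        by (simp add: prod_eq_iff fst_sum snd_sum)
      moreover have "(\<Sum>j\<in>UNIV. b$j *\<^sub>R ((0::real^'n), (axis j 1 :: real^'n))) = (0, \<Sum>j\<in>UNIV. b$j *\<^sub>R axis j 1)"
        by (simp add: prod_eq_iff fst_sum snd_sum)
      moreover have "(\<Sum>j\<in>UNIV. a$j *\<^sub>R axis j 1) = a" "(\<Sum>j\<in>UNIV. b$j *\<^sub>R axis j 1) = b"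
        using basis_expansion[of a] basis_expansion[of b] by (simp_all add: scalar_mult_eq_scaleR)
      ultimately show ?thesis by simp
    qed
    note eq = this
    have "g (a, b) = g (\<Sum>j\<in>UNIV. a$j *\<^sub>R (axis j 1, 0)) + g (\<Sum>j\<in>UNIV. b$j *\<^sub>R (0, axis j 1))"
      by (subst eq) (rule linear_add[OF lin])
    also have "\<dots> = (\<Sum>j\<in>UNIV. a$j * g (axis j 1, 0)) + (\<Sum>j\<in>UNIV. b$j * g (0, axis j 1))"
      by (simp only: linear_sum[OF lin] linear_scale[OF lin] o_def real_scaleR_def)
    finally show ?thesis .
  qed
  have "tp (\<lambda>x. (\<Sum>j\<in>UNIV. complex_of_real (cos (2 * pi * x$j)) * complex_of_real (g (axis j 1, 0)))
             + (\<Sum>j\<in>UNIV. complex_of_real (sin (2 * pi * x$j)) * complex_of_real (g (0, axis j 1))))"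
    by (intro tp_add tp_sum tp_mult tp_const tp_cos tp_sin) auto
  moreover have "complex_of_real (g (EE x)) = (\<Sum>j\<in>UNIV. complex_of_real (cos (2 * pi * x$j)) * complex_of_real (g (axis j 1, 0)))
             + (\<Sum>j\<in>UNIV. complex_of_real (sin (2 * pi * x$j)) * complex_of_real (g (0, axis j 1)))" for x
    unfolding EE_def by (subst exp) simp
  ultimately show ?thesis by simp
qed

lemma tp_poly: "real_polynomial_function g \<Longrightarrow> tp (\<lambda>x. complex_of_real (g (EE x)))"
proof (induction rule: real_polynomial_function.induct)
  case (linear f) then show ?case by (rule tp_linear)
next
  case (const c) then show ?case by (rule tp_const)
next
  case (add f g) then show ?case by (simp add: tp_add)
next
  case (mult f g) then show ?case by (simp add: tp_mult)
qed

lemma EE_eq: assumes "EE x = EE y" shows "int_vec (x - y)"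
  unfolding int_vec_def
proof
  fix j
  have c: "cos (2*pi*x$j) = cos (2*pi*y$j)" and s: "sin (2*pi*x$j) = sin (2*pi*y$j)"
    using assms by (auto simp: EE_def vec_eq_iff)
  have "cos (2*pi*x$j - 2*pi*y$j) = 1"
    unfolding cos_diff c s by (simp add: flip: power2_eq_square)
  then obtain n :: int where n: "2*pi*x$j - 2*pi*y$j = of_int n * 2 * pi" using cos_one_2pi_int by blast
  have "2 * pi * ((x - y)$j - of_int n) = 0" using n by (simp add: algebra_simps)
  then have "(x - y)$j = n" by simp
  then show "(x - y)$j \<in> \<int>" by simp
qed

lemma cube_rep: "\<exists>y z. y \<in> cbox 0 (1::real^'n) \<and> int_vec z \<and> x = y + z"
proof -
  define z :: "real^'n" where "z = (\<chi> j. of_int (floor (x$j)))"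
  have "int_vec z" by (simp add: z_def int_vec_def)
  moreover have "x - z \<in> cbox 0 1"
    by (auto simp: mem_box_cart z_def) linarith+
  ultimately show ?thesis by (intro exI[of _ "x - z"] exI[of _ z]) auto
qed

lemma tp_int:
  fixes h :: "real^'n \<Rightarrow> complex"
  assumes cont: "continuous_on UNIV h" and fc0: "\<And>k. fc h k = 0" and q: "tp q"
  shows "integral (cbox 0 1) (\<lambda>x. h x * q x) = 0"
  using q
proof (induction rule: tp.induct)
  case tp0 then show ?case by simp
next
  case (tpS q a k)
  have i1: "(\<lambda>x. h x * ee k x) integrable_on cbox 0 1"
    by (rule integrable_continuous) (auto intro!: continuous_intros cont_ee continuous_on_subset[OF cont])
  have i2: "(\<lambda>x. h x * q x) integrable_on cbox 0 1"
    by (rule integrable_continuous) (auto intro!: continuous_intros continuous_on_subset[OF cont] continuous_on_subset[OF tp_cont[OF tpS.hyps]])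
  have "integral (cbox 0 1) (\<lambda>x. h x * ee k x) = fc h (-k)" unfolding fc_def by simp
  then have z: "integral (cbox 0 1) (\<lambda>x. h x * ee k x) = 0" using fc0 by simp
  have feq: "(\<lambda>x. h x * (a * ee k x + q x)) = (\<lambda>x. a * (h x * ee k x) + h x * q x)"
    by (auto simp: algebra_simps)
  have i1': "(\<lambda>x. a * (h x * ee k x)) integrable_on cbox 0 1"
    by (rule integrable_continuous) (auto intro!: continuous_intros cont_ee continuous_on_subset[OF cont])
  then show ?case
    unfolding feq using integral_add[OF i1' i2] z tpS.IH by simp
qed

lemma uniq_real:
  fixes h :: "real^'n \<Rightarrow> real"
  assumes cont: "continuous_on UNIV h" and per: "\<And>x z. int_vec z \<Longrightarrow> h (x + z) = h x"
    and fc0: "\<And>k. fc (\<lambda>x. of_real (h x)) k = 0"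
  shows "h x = 0"
proof -
  define S where "S = cbox 0 (1::real^'n)"
  define T where "T = EE ` S"
  have cEE: "continuous_on S EE" unfolding EE_def by (intro continuous_intros)
  have cT: "compact T" unfolding T_def S_def by (intro compact_continuous_image cEE[unfolded S_def] compact_cbox)
  define ht where "ht y = h (SOME x. EE x = y)" for y
  have htE: "ht (EE x) = h x" for x
  proof -
    define x' where "x' = (SOME x'. EE x' = EE x)"
    have "EE x' = EE x" unfolding x'_def by (rule someI) simp
    then have "int_vec (x - x')" using EE_eq by metis
    then have "h (x' + (x - x')) = h x'" by (rule per)
    then show ?thesis by (simp add: ht_def x'_def)
  qed
  have cht: "continuous_on T ht" unfolding continuous_openin_preimage_eq
  proof (intro allI impI)
    fix V :: "real set" assume V: "open V"
    have sub: "T \<inter> ht -` V \<subseteq> T" by auto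
    have eq: "S \<inter> EE -` (T \<inter> ht -` V) = S \<inter> h -` V" by (auto simp: T_def htE) (metis htE)
    have "openin (top_of_set S) (S \<inter> h -` V)"
      using continuous_on_subset[OF cont, of S] V unfolding continuous_openin_preimage_eq by auto
    then show "openin (top_of_set T) (T \<inter> ht -` V)"
      using Abstract_Topology_2.continuous_imp_quotient_map[OF cEE T_def[symmetric] _ sub] eq by (simp add: S_def)
  qed
  have cS: "compact S" by (simp add: S_def)
  obtain M where M: "\<And>x. x \<in> S \<Longrightarrow> \<bar>h x\<bar> \<le> M"
  proof -
    have "compact (h ` S)" by (intro compact_continuous_image continuous_on_subset[OF cont] cS) auto
    then obtain M where "\<forall>y\<in>h ` S. norm y \<le> M" using compact_imp_bounded bounded_iff by metis
    then show ?thesis using that by auto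
  qed
  have M0: "0 \<le> M" using M[of 0] by (simp add: S_def mem_box_cart)
  have hint: "(\<lambda>x. h x * h x) integrable_on S" unfolding S_def
    by (rule integrable_continuous) (auto intro!: continuous_intros continuous_on_subset[OF cont])
  have key: "integral S (\<lambda>x. h x * h x) \<le> M * d" if d: "d > 0" for d
  proof -
    obtain g where g: "real_polynomial_function g" and gd: "\<And>y. y \<in> T \<Longrightarrow> \<bar>ht y - g y\<bar> < d"
      using Stone_Weierstrass_real_polynomial_function[OF cT cht d] by blast
    have gd': "\<bar>h x - g (EE x)\<bar> < d" if "x \<in> S" for x using gd[of "EE x"] that by (simp add: T_def htE)
    have cg: "continuous_on UNIV (\<lambda>x. g (EE x))"
      by (intro continuous_on_compose2[OF continuous_on_polymonial_function[OF g[unfolded real_polynomial_function_eq]]]) (auto simp: EE_def intro!: continuous_intros)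
    have i3: "(\<lambda>x. h x * g (EE x)) integrable_on S" unfolding S_def
      by (rule integrable_continuous) (auto intro!: continuous_intros continuous_on_subset[OF cont] continuous_on_subset[OF cg])
    have "integral S (\<lambda>x. complex_of_real (h x) * complex_of_real (g (EE x))) = 0"
      unfolding S_def
      by (rule tp_int[OF _ fc0 tp_poly[OF g]]) (auto intro!: continuous_intros continuous_on_subset[OF cont])
    moreover have "integral S (\<lambda>x. complex_of_real (h x) * complex_of_real (g (EE x))) = of_real (integral S (\<lambda>x. h x * g (EE x)))"
      using integral_linear[OF i3 bounded_linear_of_real] by (simp add: o_def)
    ultimately have z: "integral S (\<lambda>x. h x * g (EE x)) = 0" by simp
    have i4: "(\<lambda>x. h x * (h x - g (EE x))) integrable_on S"
      unfolding S_def
      by (rule integrable_continuous) (auto intro!: continuous_intros continuous_on_subset[OF cont] continuous_on_subset[OF cg])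
    have "integral S (\<lambda>x. h x * h x) = integral S (\<lambda>x. h x * (h x - g (EE x))) + integral S (\<lambda>x. h x * g (EE x))"
      by (subst integral_add[OF i4 i3, symmetric]) (simp add: algebra_simps)
    also have "\<dots> = integral S (\<lambda>x. h x * (h x - g (EE x)))" using z by simp
    also have "\<dots> \<le> M * d"
    proof -
      have "norm (integral S (\<lambda>x. h x * (h x - g (EE x)))) \<le> (M * d) * Henstock_Kurzweil_Integration.content S"
      proof (rule has_integral_bound[OF _ integrable_integral[OF i4[unfolded S_def]], folded S_def])
        show "0 \<le> M * d" using M0 d by simp
        fix x assume x: "x \<in> S"
        show "norm (h x * (h x - g (EE x))) \<le> M * d"
          unfolding real_norm_def abs_mult using M[OF x] gd'[OF x]
          by (intro mult_mono) auto
      qed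
      then show ?thesis unfolding S_def content_cube by simp
    qed
    finally show ?thesis .
  qed
  have le0: "integral S (\<lambda>x. h x * h x) \<le> 0"
  proof (rule ccontr)
    assume "\<not> ?thesis"
    then have pos: "integral S (\<lambda>x. h x * h x) > 0" by simp
    define d where "d = integral S (\<lambda>x. h x * h x) / (2 * (M + 1))"
    have "d > 0" using pos M0 by (simp add: d_def)
    from key[OF this] have "integral S (\<lambda>x. h x * h x) \<le> M * d" .
    moreover have "M * d < integral S (\<lambda>x. h x * h x)"
    proof -
      have "M / (2*(M+1)) < 1" using M0 by (simp add: field_simps)
      then have "integral S (\<lambda>x. h x * h x) * (M / (2*(M+1))) < integral S (\<lambda>x. h x * h x) * 1"
        using pos by (intro mult_strict_left_mono)
      moreover have "M * d = integral S (\<lambda>x. h x * h x) * (M / (2*(M+1)))" by (simp add: d_def)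
      ultimately show ?thesis by simp
    qed
    ultimately show False by simp
  qed
  have ge0: "0 \<le> integral S (\<lambda>x. h x * h x)" by (rule integral_nonneg[OF hint]) simp
  have hi0: "((\<lambda>x. h x * h x) has_integral 0) S"
    using le0 ge0 integrable_integral[OF hint] by simp
  have bne: "box 0 (1::real^'n) \<noteq> {}"
  proof -
    have "(\<chi> i. 1/2) \<in> box 0 (1::real^'n)" by (simp add: mem_box_cart)
    then show ?thesis by auto
  qed
  have zS: "h y = 0" if y: "y \<in> S" for y
  proof -
    have "h y * h y = 0"
      by (rule has_integral_0_cbox_imp_0[of 0 1 "\<lambda>x. h x * h x"])
         (use hi0 y bne in \<open>auto simp: S_def intro!: continuous_intros continuous_on_subset[OF cont]\<close>)
    then show ?thesis by simp
  qed
  obtain y z where "y \<in> cbox 0 1" "int_vec z" "x = y + z" using cube_rep by blast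
  then show ?thesis using zS[of y] per[of z y] by (simp add: S_def)
qed

lemma uniq_complex:
  fixes h :: "real^'n \<Rightarrow> complex"
  assumes cont: "continuous_on UNIV h" and per: "\<And>x z. int_vec z \<Longrightarrow> h (x + z) = h x"
    and fc0: "\<And>k. fc h k = 0"
  shows "h x = 0"
proof -
  have re: "Re (h' x) = 0" if c: "continuous_on UNIV h'" and p: "\<And>x z. int_vec z \<Longrightarrow> h' (x + z) = h' x"
    and f: "\<And>k. fc h' k = 0" for h' :: "real^'n \<Rightarrow> complex" and x
  proof (rule uniq_real[of "\<lambda>x. Re (h' x)"])
    show "continuous_on UNIV (\<lambda>x. Re (h' x))" by (intro continuous_intros c)
    show "Re (h' (x + z)) = Re (h' x)" if "int_vec z" for x z using p[OF that] by simp
    fix k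
    have i1: "(\<lambda>x. h' x * ee (-k) x) integrable_on cbox 0 1"
      by (rule integrable_continuous) (auto intro!: continuous_intros cont_ee continuous_on_subset[OF c])
    have i2: "(\<lambda>x. cnj (h' x * ee k x)) integrable_on cbox 0 1"
      by (rule integrable_continuous) (auto intro!: continuous_intros cont_ee continuous_on_subset[OF c])
    have "(\<lambda>x. complex_of_real (Re (h' x)) * ee (-k) x) = (\<lambda>x. (h' x * ee (-k) x + cnj (h' x * ee k x)) / 2)"
      by (auto simp: complex_eq_iff ee_neg)
    then have "fc (\<lambda>x. complex_of_real (Re (h' x))) k = integral (cbox 0 1) (\<lambda>x. (h' x * ee (-k) x + cnj (h' x * ee k x)) / 2)"
      unfolding fc_def by simp
    also have "\<dots> = (fc h' k + cnj (fc h' (-k))) / 2"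
      unfolding fc_def using integral_add[OF i1 i2]
      by (simp add: Henstock_Kurzweil_Integration.integral_cnj)
    finally show "fc (\<lambda>x. complex_of_real (Re (h' x))) k = 0" using f by simp
  qed
  have "Re (h x) = 0" by (rule re[OF cont per fc0])
  moreover have "Re (- \<i> * h x) = 0"
  proof (rule re[of "\<lambda>x. - \<i> * h x"])
    show "continuous_on UNIV (\<lambda>x. - \<i> * h x)" by (intro continuous_intros cont)
    show "- \<i> * h (x + z) = - \<i> * h x" if "int_vec z" for x z using per[OF that] by simp
    fix k
    have i1: "(\<lambda>x. h x * ee (-k) x) integrable_on cbox 0 1"
      by (rule integrable_continuous) (auto intro!: continuous_intros cont_ee continuous_on_subset[OF cont])
    show "fc (\<lambda>x. - \<i> * h x) k = 0"
      using fc0[of k] by (simp add: fc_def mult.assoc)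
  qed
  ultimately show ?thesis by (simp add: complex_eq_iff)
qed

definition SN :: "(real^'n \<Rightarrow> real) \<Rightarrow> nat \<Rightarrow> real^'n \<Rightarrow> complex" where
  "SN G N x = (\<Sum>k\<in>BB N. fc (\<lambda>x. of_real (G x)) k * ee k x)"

lemma SN_cont: "continuous_on UNIV (SN G N)"
  unfolding SN_def by (intro continuous_intros cont_ee)

lemma SN_per: "int_vec z \<Longrightarrow> SN G N (x + z) = SN G N x"
  unfolding SN_def by (simp add: ee_int)

lemma ee_diff: "ee (l - k) x = ee l x * ee (-k) x"
  using ee_add_k[of l "-k" x] by simp

lemma fc_SN: "k \<in> BB N \<Longrightarrow> fc (SN G N) k = fc (\<lambda>x. of_real (G x)) k"
proof -
  assume k: "k \<in> BB N"
  have "fc (SN G N) k = integral (cbox 0 1) (\<lambda>x. \<Sum>l\<in>BB N. fc (\<lambda>x. of_real (G x)) l * ee (l - k) x)"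
    unfolding fc_def SN_def by (simp add: sum_distrib_right ee_diff mult.assoc)
  also have "\<dots> = (\<Sum>l\<in>BB N. integral (cbox 0 1) (\<lambda>x. fc (\<lambda>x. of_real (G x)) l * ee (l - k) x))"
    by (rule integral_sum[OF finite_BB]) (auto intro!: integrable_continuous continuous_intros cont_ee)
  also have "\<dots> = (\<Sum>l\<in>BB N. fc (\<lambda>x. of_real (G x)) l * (if l = k then 1 else 0))"
    by (intro sum.cong refl) (simp add: orth)
  also have "\<dots> = fc (\<lambda>x. of_real (G x)) k" using k by (simp add: finite_BB if_distrib cong: if_cong)
  finally show ?thesis .
qed

lemma fourier_unif:
  fixes G :: "real^'n \<Rightarrow> real"
  assumes cont: "continuous_on UNIV G" and per: "\<And>x z. int_vec z \<Longrightarrow> G (x + z) = G x"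
    and summ: "\<And>N. (\<Sum>k\<in>BB N. norm (fc (\<lambda>x. of_real (G x)) k)) \<le> L"
  shows "\<exists>eps. eps \<longlonglongrightarrow> 0 \<and> (\<forall>N x. norm (of_real (G x) - SN G N x) \<le> eps N)"
proof -
  define gh where "gh k = fc (\<lambda>x. of_real (G x)) k" for k
  define Tn where "Tn N = (\<Sum>k\<in>BB N. norm (gh k))" for N
  have inc: "incseq Tn" unfolding incseq_def Tn_def
    by (intro allI impI sum_mono2 finite_BB BB_mono) auto
  obtain Lt where Lt: "Tn \<longlonglongrightarrow> Lt" "\<And>i. Tn i \<le> Lt"
    using incseq_convergent[OF inc, of L] summ unfolding Tn_def gh_def by blast
  have diff: "norm (SN G M x - SN G N x) \<le> Tn M - Tn N" if "N \<le> M" for N M x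
  proof -
    have "SN G M x - SN G N x = (\<Sum>k\<in>BB M - BB N. gh k * ee k x)"
      unfolding SN_def gh_def by (rule sum_diff[OF finite_BB BB_mono[OF that], symmetric])
    also have "norm \<dots> \<le> (\<Sum>k\<in>BB M - BB N. norm (gh k * ee k x))" by (rule norm_sum)
    also have "\<dots> = Tn M - Tn N"
      unfolding Tn_def by (simp add: norm_mult sum_diff[OF finite_BB BB_mono[OF that]])
    finally show ?thesis .
  qed
  have cT: "Cauchy Tn" using Lt(1) LIMSEQ_imp_Cauchy by blast
  have conv: "convergent (\<lambda>N. SN G N x)" for x
  proof -
    have "Cauchy (\<lambda>N. SN G N x)"
    proof (rule CauchyI)
      fix e :: real assume "0 < e"
      from CauchyD[OF cT this] obtain M where M: "\<And>m n. M \<le> m \<Longrightarrow> M \<le> n \<Longrightarrow> norm (Tn m - Tn n) < e" by blast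
      show "\<exists>M. \<forall>m\<ge>M. \<forall>n\<ge>M. norm (SN G m x - SN G n x) < e"
      proof (intro exI allI impI)
        fix m n assume "M \<le> m" "M \<le> n"
        show "norm (SN G m x - SN G n x) < e"
        proof (cases "n \<le> m")
          case True
          then show ?thesis using diff[OF True, of x] M[OF \<open>M \<le> m\<close> \<open>M \<le> n\<close>] by simp
        next
          case False
          then have mn: "m \<le> n" by simp
          show ?thesis using diff[OF mn, of x] M[OF \<open>M \<le> n\<close> \<open>M \<le> m\<close>]
            by (simp add: norm_minus_commute)
        qed
      qed
    qed
    then show ?thesis using Cauchy_convergent_iff by blast
  qed
  define S where "S x = lim (\<lambda>N. SN G N x)" for x
  have Slim: "(\<lambda>N. SN G N x) \<longlonglongrightarrow> S x" for x
    unfolding S_def using conv convergent_LIMSEQ_iff by blast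
  define eps where "eps N = Lt - Tn N" for N
  have eps0: "eps \<longlonglongrightarrow> 0" unfolding eps_def using tendsto_diff[OF tendsto_const Lt(1), of Lt] by simp
  have Sb: "norm (S x - SN G N x) \<le> eps N" for N x
  proof -
    have "(\<lambda>M. norm (SN G M x - SN G N x)) \<longlonglongrightarrow> norm (S x - SN G N x)"
      by (intro tendsto_intros Slim)
    moreover have "\<forall>M\<ge>N. norm (SN G M x - SN G N x) \<le> eps N"
      using diff Lt(2) by (auto simp: eps_def) (smt (verit) diff)
    ultimately show ?thesis by (rule Lim_bounded)
  qed
  have ul: "uniform_limit UNIV (\<lambda>N. SN G N) S sequentially"
  proof (rule uniform_limitI)
    fix e :: real assume "0 < e"
    then have "\<forall>\<^sub>F N in sequentially. eps N < e" using eps0 by (auto dest: order_tendstoD)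
    then show "\<forall>\<^sub>F N in sequentially. \<forall>x\<in>UNIV. dist (SN G N x) (S x) < e"
      by eventually_elim (use Sb in \<open>auto simp: dist_norm norm_minus_commute intro: le_less_trans\<close>)
  qed
  have cS: "continuous_on UNIV S"
    by (rule uniform_limit_theorem[OF _ ul]) (auto simp: SN_cont)
  have pS: "S (x + z) = S x" if "int_vec z" for x z
    using Slim[of "x + z"] Slim[of x] SN_per[OF that] LIMSEQ_unique by fastforce
  have fcS: "fc S k = gh k" for k
  proof -
    obtain N0 where N0: "k \<in> BB N0"
    proof
      show "k \<in> BB (\<Sum>i\<in>UNIV. nat \<bar>k$i\<bar>)" unfolding BB_def
      proof (clarify)
        fix i
        have "nat \<bar>k$i\<bar> \<le> (\<Sum>i\<in>UNIV. nat \<bar>k$i\<bar>)" by (rule member_le_sum) auto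
        then show "\<bar>k$i\<bar> \<le> int (\<Sum>i\<in>UNIV. nat \<bar>k$i\<bar>)" by linarith
      qed
    qed
    have "norm (fc S k - gh k) \<le> eps N" if "N \<ge> N0" for N
    proof -
      have "fc S k - gh k = fc S k - fc (SN G N) k"
        using fc_SN[of k N G] BB_mono[OF that] N0 unfolding gh_def by auto
      also have "\<dots> = fc (\<lambda>x. S x - SN G N x) k" by (rule fc_diff[OF cS SN_cont, symmetric])
      also have "norm \<dots> \<le> eps N" by (rule fc_bound) (auto intro!: continuous_intros cS SN_cont Sb)
      finally show ?thesis .
    qed
    then have "norm (fc S k - gh k) \<le> 0"
      by (intro LIMSEQ_le_const[OF eps0]) blast
    then show ?thesis by simp
  qed
  have GS: "of_real (G x) = S x" for x
  proof -
    have cG: "continuous_on UNIV (\<lambda>x. complex_of_real (G x))"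
      by (intro continuous_on_compose2[OF continuous_on_of_real cont]) auto
    have "(\<lambda>x. complex_of_real (G x) - S x) x = 0"
    proof (rule uniq_complex)
      show "continuous_on UNIV (\<lambda>x. complex_of_real (G x) - S x)" by (intro continuous_intros cG cS)
      show "complex_of_real (G (x + z)) - S (x + z) = complex_of_real (G x) - S x" if "int_vec z" for x z
        using per[OF that] pS[OF that] by simp
      show "fc (\<lambda>x. complex_of_real (G x) - S x) k = 0" for k
        using fc_diff[OF cG cS, of k] fcS[of k] unfolding gh_def by simp
    qed
    then show ?thesis by simp
  qed
  show ?thesis using eps0 Sb GS by auto
qed

lemma LI:
  fixes \<xi> c :: "real^'n"
  assumes a: "rv k \<bullet> \<xi> \<noteq> 0" and L: "0 \<le> L"
  shows "norm (integral {0..L} (\<lambda>r. ee k (c + r *\<^sub>R \<xi>))) \<le> 1 / \<bar>rv k \<bullet> \<xi>\<bar>"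
proof -
  define a where "a = rv k \<bullet> \<xi>"
  define w where "w = \<i> * complex_of_real (2 * pi * a)"
  have w0: "w \<noteq> 0" using a by (simp add: w_def a_def)
  define F where "F z = exp (w * z) / w" for z
  have dF: "(F has_field_derivative exp (w * z)) (at z)" for z
    unfolding F_def using w0 by (auto intro!: derivative_eq_intros simp: field_simps)
  have int: "((\<lambda>r. exp (w * of_real r)) has_integral (F (of_real L) - F (of_real 0))) {0..L}"
    by (rule fundamental_theorem_of_calculus[OF L]) (rule has_vector_derivative_real_field[OF dF])
  have eq: "ee k (c + r *\<^sub>R \<xi>) = ee k c * exp (w * of_real r)" for r
  proof -
    have "ee k (c + r *\<^sub>R \<xi>) = cis (2*pi*(rv k \<bullet> c)) * cis (2*pi*a*r)"
      by (simp add: ee_def inner_add_right a_def cis_mult algebra_simps)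
    also have "cis (2*pi*a*r) = exp (w * of_real r)" by (simp add: cis_conv_exp w_def algebra_simps)
    finally show ?thesis by (simp add: ee_def)
  qed
  have "integral {0..L} (\<lambda>r. ee k (c + r *\<^sub>R \<xi>)) = ee k c * (F (of_real L) - F (of_real 0))"
    unfolding eq using integral_unique[OF int] by simp
  also have "norm \<dots> \<le> norm (F (of_real L)) + norm (F (of_real 0))"
    by (simp add: norm_mult norm_triangle_ineq4)
  also have "norm (F (of_real L)) = 1 / (2 * pi * \<bar>a\<bar>)"
    unfolding F_def w_def by (simp add: norm_divide norm_mult)
  also have "norm (F (of_real 0)) = 1 / (2 * pi * \<bar>a\<bar>)"
    unfolding F_def w_def by (simp add: norm_divide norm_mult)
  also have "1 / (2 * pi * \<bar>a\<bar>) + 1 / (2 * pi * \<bar>a\<bar>) \<le> 1 / \<bar>a\<bar>"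
    using a pi_gt3 by (simp add: a_def field_simps)
  finally show ?thesis unfolding a_def .
qed

lemma line_int_bound:
  fixes G :: "real^'n \<Rightarrow> real" and \<xi> :: "real^'n"
  assumes cont: "continuous_on UNIV G" and per: "\<And>x z. int_vec z \<Longrightarrow> G (x + z) = G x"
    and summ: "\<And>N. (\<Sum>k\<in>BB N. norm (fc (\<lambda>x. of_real (G x)) k)) \<le> L1"
    and kb: "\<And>N. (\<Sum>k\<in>BB N - {0}. norm (fc (\<lambda>x. of_real (G x)) k) * (1 / \<bar>rv k \<bullet> \<xi>\<bar>)) \<le> K"
    and nz: "\<And>k. k \<noteq> 0 \<Longrightarrow> rv k \<bullet> \<xi> \<noteq> 0"
    and Lg: "0 \<le> Lg"
  shows "\<bar>integral {0..Lg} (\<lambda>r. G (c + r *\<^sub>R \<xi>)) - integral (cbox 0 1) G * Lg\<bar> \<le> K"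
proof -
  define gh where "gh k = fc (\<lambda>x. of_real (G x)) k" for k
  obtain eps where eps0: "eps \<longlonglongrightarrow> 0" and eb: "\<And>N x. norm (of_real (G x) - SN G N x) \<le> eps N"
    using fourier_unif[OF cont per summ] by blast
  have cG: "continuous_on UNIV (\<lambda>x. complex_of_real (G x))"
    by (intro continuous_on_compose2[OF continuous_on_of_real cont]) auto
  have cl: "continuous_on {0..Lg} (\<lambda>r. c + r *\<^sub>R \<xi>)" by (intro continuous_intros)
  have gh0: "gh 0 = of_real (integral (cbox 0 1) G)"
  proof -
    have "G integrable_on cbox 0 1" by (rule integrable_continuous) (rule continuous_on_subset[OF cont], simp)
    from integral_linear[OF this bounded_linear_of_real] show ?thesis
      by (simp add: gh_def fc_def o_def)
  qed
  have Ic: "integral {0..Lg} (\<lambda>r. complex_of_real (G (c + r *\<^sub>R \<xi>))) = of_real (integral {0..Lg} (\<lambda>r. G (c + r *\<^sub>R \<xi>)))"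
  proof -
    have "(\<lambda>r. G (c + r *\<^sub>R \<xi>)) integrable_on {0..Lg}"
      by (rule integrable_continuous_interval) (intro continuous_on_compose2[OF cont cl], auto)
    from integral_linear[OF this bounded_linear_of_real] show ?thesis by (simp add: o_def)
  qed
  have bnd: "norm (integral {0..Lg} (\<lambda>r. complex_of_real (G (c + r *\<^sub>R \<xi>))) - gh 0 * of_real Lg) \<le> K + eps N * Lg" for N
  proof -
    have iS: "(\<lambda>r. SN G N (c + r *\<^sub>R \<xi>)) integrable_on {0..Lg}"
      by (rule integrable_continuous_interval) (intro continuous_on_compose2[OF SN_cont cl], auto)
    have iD: "(\<lambda>r. complex_of_real (G (c + r *\<^sub>R \<xi>)) - SN G N (c + r *\<^sub>R \<xi>)) integrable_on {0..Lg}"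
      by (rule integrable_continuous_interval) (intro continuous_intros continuous_on_compose2[OF cG cl] continuous_on_compose2[OF SN_cont cl], auto)
    have split: "integral {0..Lg} (\<lambda>r. complex_of_real (G (c + r *\<^sub>R \<xi>))) =
        integral {0..Lg} (\<lambda>r. SN G N (c + r *\<^sub>R \<xi>)) + integral {0..Lg} (\<lambda>r. complex_of_real (G (c + r *\<^sub>R \<xi>)) - SN G N (c + r *\<^sub>R \<xi>))"
      by (subst integral_add[OF iS iD, symmetric]) simp
    have e1: "norm (integral {0..Lg} (\<lambda>r. complex_of_real (G (c + r *\<^sub>R \<xi>)) - SN G N (c + r *\<^sub>R \<xi>))) \<le> eps N * (Lg - 0)"
      by (rule integral_bound[OF Lg]) (auto intro!: continuous_intros continuous_on_compose2[OF cG cl] continuous_on_compose2[OF SN_cont cl] eb)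
    have SNi: "integral {0..Lg} (\<lambda>r. SN G N (c + r *\<^sub>R \<xi>)) = (\<Sum>k\<in>BB N. gh k * integral {0..Lg} (\<lambda>r. ee k (c + r *\<^sub>R \<xi>)))"
      unfolding SN_def gh_def[symmetric]
      by (subst integral_sum[OF finite_BB]) (auto intro!: integrable_continuous_interval continuous_intros continuous_on_compose2[OF cont_ee cl])
    have "(\<Sum>k\<in>BB N. gh k * integral {0..Lg} (\<lambda>r. ee k (c + r *\<^sub>R \<xi>))) =
          gh 0 * integral {0..Lg} (\<lambda>r. ee 0 (c + r *\<^sub>R \<xi>)) + (\<Sum>k\<in>BB N - {0}. gh k * integral {0..Lg} (\<lambda>r. ee k (c + r *\<^sub>R \<xi>)))"
      by (rule sum.remove[OF finite_BB zero_BB])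
    also have "integral {0..Lg} (\<lambda>r. ee 0 (c + r *\<^sub>R \<xi>)) = of_real Lg" using Lg by (simp add: scaleR_conv_of_real)
    finally have SNi2: "integral {0..Lg} (\<lambda>r. SN G N (c + r *\<^sub>R \<xi>)) - gh 0 * of_real Lg = (\<Sum>k\<in>BB N - {0}. gh k * integral {0..Lg} (\<lambda>r. ee k (c + r *\<^sub>R \<xi>)))"
      unfolding SNi by simp
    have "norm (\<Sum>k\<in>BB N - {0}. gh k * integral {0..Lg} (\<lambda>r. ee k (c + r *\<^sub>R \<xi>))) \<le>
          (\<Sum>k\<in>BB N - {0}. norm (gh k) * (1 / \<bar>rv k \<bullet> \<xi>\<bar>))"
    proof (rule order.trans[OF norm_sum], rule sum_mono)
      fix k :: "int^'n" assume k: "k \<in> BB N - {0}"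
      have "norm (integral {0..Lg} (\<lambda>r. ee k (c + r *\<^sub>R \<xi>))) \<le> 1 / \<bar>rv k \<bullet> \<xi>\<bar>"
        using LI[OF nz Lg] k by auto
      then show "norm (gh k * integral {0..Lg} (\<lambda>r. ee k (c + r *\<^sub>R \<xi>))) \<le> norm (gh k) * (1 / \<bar>rv k \<bullet> \<xi>\<bar>)"
        unfolding norm_mult by (rule mult_left_mono) simp
    qed
    also have "\<dots> \<le> K" using kb unfolding gh_def .
    finally have e2: "norm (integral {0..Lg} (\<lambda>r. SN G N (c + r *\<^sub>R \<xi>)) - gh 0 * of_real Lg) \<le> K"
      unfolding SNi2 .
    show ?thesis unfolding split using e1 e2 norm_triangle_ineq[of "integral {0..Lg} (\<lambda>r. SN G N (c + r *\<^sub>R \<xi>)) - gh 0 * of_real Lg"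
      "integral {0..Lg} (\<lambda>r. complex_of_real (G (c + r *\<^sub>R \<xi>)) - SN G N (c + r *\<^sub>R \<xi>))"]
      by (simp add: algebra_simps)
  qed
  have "(\<lambda>N. K + eps N * Lg) \<longlonglongrightarrow> K + 0 * Lg" by (intro tendsto_intros eps0)
  then have t: "(\<lambda>N. K + eps N * Lg) \<longlonglongrightarrow> K" by simp
  have "norm (integral {0..Lg} (\<lambda>r. complex_of_real (G (c + r *\<^sub>R \<xi>))) - gh 0 * of_real Lg) \<le> K"
    by (rule LIMSEQ_le_const[OF t]) (use bnd in blast)
  then show ?thesis unfolding Ic gh0
    by (metis norm_of_real of_real_diff of_real_mult)
qed

lemma key_bound:
  fixes \<xi> :: "real^'n" and G :: "real^'n \<Rightarrow> real" and m :: nat and C\<^sub>\<xi> \<sigma> :: real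
  assumes C\<xi>_pos: "C\<^sub>\<xi> > 0" and \<sigma>_pos: "\<sigma> > 0"
    and dioph: "\<And>k. int_vec k \<Longrightarrow> k \<noteq> 0 \<Longrightarrow>
                 \<bar>\<xi> \<bullet> k\<bar> \<ge> C\<^sub>\<xi> * norm k powr (- (real CARD('n) + \<sigma>))"
    and G_Cm: "cont_diff m G"
    and m_big: "real m > 2 * real CARD('n) + \<sigma>"
    and G_per: "\<And>x k. int_vec k \<Longrightarrow> G (x + k) = G x"
  shows "\<exists>K. \<forall>c Lg. 0 \<le> Lg \<longrightarrow> \<bar>integral {0..Lg} (\<lambda>r. G (c + r *\<^sub>R \<xi>)) - integral (cbox 0 1) G * Lg\<bar> \<le> K"
proof -
  define n where "n = real CARD('n)"
  have n1: "n \<ge> 1" unfolding n_def using card_gt_0_iff[of "UNIV::'n set"] by simp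
  define gh where "gh k = fc (\<lambda>x. of_real (G x)) k" for k
  have cont: "continuous_on UNIV G" by (rule cont_diff_cont[OF G_Cm])
  obtain B where B: "\<And>k j. k$j \<noteq> 0 \<Longrightarrow> norm (gh k) \<le> B * (1 / (4 * \<bar>real_of_int (k$j)\<bar>)) ^ m"
    using decay[OF G_Cm G_per] unfolding gh_def by blast
  define A0 where "A0 = max B 0"
  have jnz: "k$j \<noteq> 0" if "k \<noteq> 0" "\<forall>i. \<bar>k$i\<bar> \<le> \<bar>k$j\<bar>" for k :: "int^'n" and j
  proof
    assume "k$j = 0"
    then have "\<bar>k$i\<bar> \<le> 0" for i using that(2) by (metis abs_zero)
    then have "k$i = 0" for i by (metis abs_le_zero_iff)
    then show False using that(1) by (simp add: vec_eq_iff)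
  qed
  have ghb: "norm (gh k) \<le> A0 * real_of_int \<bar>k$j\<bar> powr (- real m)" if "k$j \<noteq> 0" for k :: "int^'n" and j
  proof -
    define a where "a = real_of_int \<bar>k$j\<bar>"
    have a1: "a \<ge> 1" using that by (simp add: a_def)
    have "(1 / (4 * a)) ^ m \<le> (1 / a) ^ m"
      using a1 by (intro power_mono) (auto simp: field_simps)
    also have "(1 / a) ^ m = a powr (- real m)" using a1 by (simp add: powr_minus powr_realpow divide_inverse power_inverse)
    finally have le: "(1 / (4 * a)) ^ m \<le> a powr (- real m)" .
    have "norm (gh k) \<le> B * (1 / (4 * a)) ^ m" using B[OF that] by (simp add: a_def)
    also have "\<dots> \<le> A0 * (1 / (4 * a)) ^ m" by (intro mult_right_mono) (auto simp: A0_def a_def)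
    also have "\<dots> \<le> A0 * a powr (- real m)" by (intro mult_left_mono le) (auto simp: A0_def)
    finally show ?thesis by (simp add: a_def)
  qed
  have mn: "real m > real CARD('n)" using m_big \<sigma>_pos by simp
  have fb1: "0 \<le> norm (gh k) \<and> norm (gh k) \<le> A0 * real_of_int \<bar>k$j\<bar> powr (- real m)"
    if "k \<noteq> 0" "\<forall>i. \<bar>k$i\<bar> \<le> \<bar>k$j\<bar>" for k :: "int^'n" and j
    using ghb[OF jnz[OF that]] by simp
  from lattice_sum[where f="\<lambda>k. norm (gh k)" and A=A0 and p="real m", OF mn fb1]
  obtain L1' where L1': "\<And>N. (\<Sum>k\<in>BB N - {0}. norm (gh k)) \<le> L1'"
    by blast
  have summ: "(\<Sum>k\<in>BB N. norm (fc (\<lambda>x. of_real (G x)) k)) \<le> norm (gh 0) + L1'" for N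
    using L1'[of N] sum.remove[OF finite_BB zero_BB, of "\<lambda>k. norm (gh k)" N] unfolding gh_def by simp
  have nz: "rv k \<bullet> \<xi> \<noteq> 0" if "k \<noteq> 0" for k :: "int^'n"
  proof -
    have r0: "rv k \<noteq> 0" using that rv_eq0 by blast
    have "0 < C\<^sub>\<xi> * norm (rv k) powr (- (real CARD('n) + \<sigma>))" using C\<xi>_pos r0 by simp
    also have "\<dots> \<le> \<bar>\<xi> \<bullet> rv k\<bar>" by (rule dioph[OF int_vec_rv r0])
    finally show ?thesis by (simp add: inner_commute)
  qed
  define p where "p = real m - n - \<sigma>"
  have pn: "p > real CARD('n)" using m_big unfolding p_def n_def by simp
  define A2 where "A2 = A0 * (n powr (n + \<sigma>) / C\<^sub>\<xi>)"
  have fb2: "0 \<le> norm (gh k) * (1 / \<bar>rv k \<bullet> \<xi>\<bar>) \<and> norm (gh k) * (1 / \<bar>rv k \<bullet> \<xi>\<bar>) \<le> A2 * real_of_int \<bar>k$j\<bar> powr (- p)"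
    if k0: "k \<noteq> 0" and jm: "\<forall>i. \<bar>k$i\<bar> \<le> \<bar>k$j\<bar>" for k :: "int^'n" and j
  proof
    show "0 \<le> norm (gh k) * (1 / \<bar>rv k \<bullet> \<xi>\<bar>)" by simp
    define a where "a = real_of_int \<bar>k$j\<bar>"
    have kj: "k$j \<noteq> 0" by (rule jnz[OF k0 jm])
    have a1: "a \<ge> 1" using kj by (simp add: a_def)
    have r0: "rv k \<noteq> 0" using k0 rv_eq0 by blast
    have nr: "norm (rv k) \<le> n * a"
    proof -
      have "norm (rv k) \<le> (\<Sum>i\<in>UNIV. \<bar>rv k $ i\<bar>)" by (rule norm_le_l1_cart)
      also have "\<dots> \<le> (\<Sum>i\<in>(UNIV::'n set). a)"
      proof (rule sum_mono)
        fix i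
        have "\<bar>k$i\<bar> \<le> \<bar>k$j\<bar>" using jm by blast
        then show "\<bar>rv k $ i\<bar> \<le> a" unfolding rv_def a_def by (simp del: of_int_abs add: of_int_abs[symmetric])
      qed
      also have "\<dots> = n * a" by (simp add: n_def)
      finally show ?thesis .
    qed
    have dpos: "0 < C\<^sub>\<xi> * norm (rv k) powr (- (n + \<sigma>))" using C\<xi>_pos r0 by simp
    have dle: "C\<^sub>\<xi> * norm (rv k) powr (- (n + \<sigma>)) \<le> \<bar>rv k \<bullet> \<xi>\<bar>"
      using dioph[OF int_vec_rv r0] by (simp add: inner_commute n_def)
    have "1 / \<bar>rv k \<bullet> \<xi>\<bar> \<le> 1 / (C\<^sub>\<xi> * norm (rv k) powr (- (n + \<sigma>)))"
      by (rule divide_left_mono[OF dle]) (use dpos nz[OF k0] in auto)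
    also have "\<dots> = norm (rv k) powr (n + \<sigma>) / C\<^sub>\<xi>"
    proof -
      have "norm (rv k) powr (n + \<sigma>) > 0" using r0 by simp
      then show ?thesis using C\<xi>_pos by (simp only: powr_minus_divide) (simp add: field_simps)
    qed
    also have "\<dots> \<le> (n * a) powr (n + \<sigma>) / C\<^sub>\<xi>"
      using C\<xi>_pos n1 \<sigma>_pos nr by (intro divide_right_mono powr_mono2) auto
    also have "\<dots> = n powr (n + \<sigma>) * a powr (n + \<sigma>) / C\<^sub>\<xi>"
      using n1 a1 by (simp add: powr_mult)
    finally have i1: "1 / \<bar>rv k \<bullet> \<xi>\<bar> \<le> n powr (n + \<sigma>) * a powr (n + \<sigma>) / C\<^sub>\<xi>" .
    have "norm (gh k) * (1 / \<bar>rv k \<bullet> \<xi>\<bar>) \<le> (A0 * a powr (- real m)) * (n powr (n + \<sigma>) * a powr (n + \<sigma>) / C\<^sub>\<xi>)"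
      using ghb[OF kj] i1 unfolding a_def by (intro mult_mono) (auto simp: A0_def)
    also have "\<dots> = A2 * (a powr (- real m) * a powr (n + \<sigma>))" by (simp add: A2_def)
    also have "a powr (- real m) * a powr (n + \<sigma>) = a powr (- p)"
    proof -
      have "a powr (- real m) * a powr (n + \<sigma>) = a powr (- real m + (n + \<sigma>))" by (rule powr_add[symmetric])
      also have "- real m + (n + \<sigma>) = - p" by (simp add: p_def)
      finally show ?thesis .
    qed
    finally show "norm (gh k) * (1 / \<bar>rv k \<bullet> \<xi>\<bar>) \<le> A2 * real_of_int \<bar>k$j\<bar> powr (- p)" by (simp add: a_def)
  qed
  from lattice_sum[where f="\<lambda>k. norm (gh k) * (1 / \<bar>rv k \<bullet> \<xi>\<bar>)" and A=A2 and p=p, OF pn fb2]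
  obtain K where K: "\<And>N. (\<Sum>k\<in>BB N - {0}. norm (gh k) * (1 / \<bar>rv k \<bullet> \<xi>\<bar>)) \<le> K"
    by blast
  have "\<bar>integral {0..Lg} (\<lambda>r. G (c + r *\<^sub>R \<xi>)) - integral (cbox 0 1) G * Lg\<bar> \<le> K"
    if "0 \<le> Lg" for c Lg
    by (rule line_int_bound[OF cont G_per summ K[unfolded gh_def] nz that])
  then show ?thesis by blast
qed

lemma ode_line:
  fixes G :: "real^'n \<Rightarrow> real" and \<xi> c :: "real^'n"
  assumes pos: "\<And>x. G x > 0" and xi: "\<xi> \<noteq> 0"
    and sol: "ode_sol (\<lambda>y. (1 / G y) *\<^sub>R \<xi>) c v"
  shows "\<exists>s. (\<forall>t\<ge>0. v t = c + s t *\<^sub>R \<xi>) \<and> s 0 = 0 \<and>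
             (\<forall>t\<ge>0. (s has_real_derivative 1 / G (c + s t *\<^sub>R \<xi>)) (at t within {0..}))"
proof -
  define D where "D = {0::real..}"
  have v0: "v 0 = c" and vd: "\<And>t. t \<in> D \<Longrightarrow> (v has_vector_derivative (1 / G (v t)) *\<^sub>R \<xi>) (at t within D)"
    using sol unfolding ode_sol_def D_def by auto
  define s where "s t = ((v t - c) \<bullet> \<xi>) / (\<xi> \<bullet> \<xi>)" for t
  have xx: "\<xi> \<bullet> \<xi> \<noteq> 0" using xi by simp
  have sd: "(s has_real_derivative 1 / G (v t)) (at t within D)" if t: "t \<in> D" for t
  proof -
    have "((\<lambda>t. (v t - c) \<bullet> \<xi> / (\<xi> \<bullet> \<xi>)) has_derivative (\<lambda>h. ((h *\<^sub>R ((1 / G (v t)) *\<^sub>R \<xi>)) \<bullet> \<xi>) / (\<xi> \<bullet> \<xi>))) (at t within D)"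
      using vd[OF t] xi unfolding has_vector_derivative_def
      by (auto intro!: derivative_eq_intros)
    moreover have "(\<lambda>h. ((h *\<^sub>R ((1 / G (v t)) *\<^sub>R \<xi>)) \<bullet> \<xi>) / (\<xi> \<bullet> \<xi>)) = (*) (1 / G (v t))"
      using xx by (auto simp: field_simps)
    ultimately show ?thesis unfolding has_field_derivative_def s_def by simp
  qed
  have "\<exists>k. \<forall>t\<in>D. v t - c - s t *\<^sub>R \<xi> = k"
  proof (rule has_derivative_zero_constant)
    show "convex D" by (simp add: D_def)
    fix t assume t: "t \<in> D"
    have "((\<lambda>t. v t - c - s t *\<^sub>R \<xi>) has_derivative (\<lambda>h. h *\<^sub>R ((1 / G (v t)) *\<^sub>R \<xi>) - (h * (1 / G (v t))) *\<^sub>R \<xi>)) (at t within D)"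
      using vd[OF t] sd[OF t] unfolding has_vector_derivative_def has_field_derivative_def
      by (auto intro!: derivative_eq_intros)
    moreover have "(\<lambda>h. h *\<^sub>R ((1 / G (v t)) *\<^sub>R \<xi>) - (h * (1 / G (v t))) *\<^sub>R \<xi>) = (\<lambda>h. 0)"
      by auto
    ultimately show "((\<lambda>t. v t - c - s t *\<^sub>R \<xi>) has_derivative (\<lambda>h. 0)) (at t within D)" by simp
  qed
  then obtain k where k: "\<And>t. t \<in> D \<Longrightarrow> v t - c - s t *\<^sub>R \<xi> = k" by blast
  have s0: "s 0 = 0" by (simp add: s_def v0)
  have "k = 0" using k[of 0] v0 s0 by (simp add: D_def)
  then have vs: "v t = c + s t *\<^sub>R \<xi>" if "t \<in> D" for t using k[OF that] by (simp add: algebra_simps)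
  show ?thesis
    by (intro exI[of _ s] conjI allI impI) (use vs s0 sd in \<open>auto simp: D_def\<close>)
qed

lemma ode_time:
  fixes g s :: "real \<Rightarrow> real"
  assumes cg: "continuous_on UNIV g" and gpos: "\<And>r. g r > 0"
    and s0: "s 0 = 0" and sd: "\<And>t. t \<ge> 0 \<Longrightarrow> (s has_real_derivative 1 / g (s t)) (at t within {0..})"
    and t: "t \<ge> 0"
  shows "s t \<ge> 0 \<and> integral {0..s t} g = t"
proof -
  define D where "D = {0::real..}"
  have cs: "continuous_on D s"
    unfolding continuous_on_eq_continuous_within
  proof
    fix x assume "x \<in> D"
    then show "continuous (at x within D) s" using DERIV_continuous[OF sd[of x]] by (simp add: D_def)
  qed
  have snn: "s t \<ge> 0" if t: "t \<ge> 0" for t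
  proof -
    have "s 0 \<le> s t"
    proof (rule DERIV_nonneg_imp_increasing_open[OF t])
      fix x assume x: "0 < x" "x < t"
      have "interior D = {0<..}" by (simp add: D_def)
      then have "at x within D = at x" using x by (intro at_within_interior) auto
      then have "DERIV s x :> 1 / g (s x)" using sd[of x] x by (simp add: D_def)
      then show "\<exists>y. DERIV s x :> y \<and> y \<ge> 0" using gpos[of "s x"] by (intro exI[of _ "1 / g (s x)"]) auto
    next
      show "continuous_on {0..t} s" by (rule continuous_on_subset[OF cs]) (auto simp: D_def)
    qed
    then show ?thesis using s0 by simp
  qed
  define Q where "Q u = integral {-1..u} g" for u
  have dQ: "(Q has_real_derivative g u) (at u)" if u: "u \<ge> 0" for u
  proof -
    have "(Q has_real_derivative g u) (at u within {-1..u+1})"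
      unfolding Q_def by (rule integral_has_real_derivative) (use u cg in \<open>auto intro: continuous_on_subset\<close>)
    moreover have "at u within {-1..u+1} = at u" using u by (intro at_within_interior) auto
    ultimately show ?thesis by simp
  qed
  have "\<exists>k. \<forall>x\<in>D. Q (s x) - x = k"
  proof (rule has_derivative_zero_constant)
    show "convex D" by (simp add: D_def)
    fix x assume x: "x \<in> D"
    have xx: "0 \<le> x" using x by (simp add: D_def)
    have "(s has_real_derivative 1 / g (s x)) (at x within D)" using sd[OF xx] by (simp add: D_def)
    from DERIV_chain'[OF this dQ[OF snn[OF xx]]]
    have "((\<lambda>x. Q (s x)) has_real_derivative g (s x) * (1 / g (s x))) (at x within D)" .
    then have "((\<lambda>x. Q (s x)) has_real_derivative 1) (at x within D)" using gpos[of "s x"] by simp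
    then have "((\<lambda>x. Q (s x) - x) has_real_derivative 1 - 1) (at x within D)"
      by (intro derivative_intros)
    moreover have "(*) (0::real) = (\<lambda>h. 0)" by auto
    ultimately show "((\<lambda>x. Q (s x) - x) has_derivative (\<lambda>h. 0)) (at x within D)"
      by (simp add: has_field_derivative_def)
  qed
  then obtain k where k: "\<And>x. x \<in> D \<Longrightarrow> Q (s x) - x = k" by blast
  have "Q (s t) - t = Q (s 0) - 0" using k[of t] k[of 0] t by (simp add: D_def)
  then have Qt: "Q (s t) = t + Q 0" using s0 by simp
  have "integral {-1..0} g + integral {0..s t} g = integral {-1..s t} g"
    by (rule Henstock_Kurzweil_Integration.integral_combine) (use snn[OF t] cg in \<open>auto intro!: integrable_continuous_interval continuous_on_subset[OF cg]\<close>)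
  then have "integral {0..s t} g = t" using Qt unfolding Q_def by simp
  then show ?thesis using snn[OF t] by simp
qed

theorem proposition3p4:
  fixes \<xi> :: "real^'n" and G :: "real^'n \<Rightarrow> real" and m :: nat
    and C\<^sub>\<xi> \<sigma> :: real
  assumes n2: "CARD('n) \<ge> 2"
    and C\<xi>_pos: "C\<^sub>\<xi> > 0" and \<sigma>_pos: "\<sigma> > 0"
    and dioph: "\<And>k. int_vec k \<Longrightarrow> k \<noteq> 0 \<Longrightarrow>
                 \<bar>\<xi> \<bullet> k\<bar> \<ge> C\<^sub>\<xi> * norm k powr (- (real CARD('n) + \<sigma>))"
    and G_Cm: "cont_diff m G"
    and m_big: "real m > 2 * real CARD('n) + \<sigma>"
    and G_per: "\<And>x k. int_vec k \<Longrightarrow> G (x + k) = G x"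
    and G_pos: "\<And>x. G x > 0"
  shows "(\<exists>C0>0. \<forall>c1 c2 v1 v2 \<tau> i.
            (\<forall>j. c1 $ j - c2 $ j \<in> {0..1}) \<longrightarrow>
            ode_sol (\<lambda>y. (1 / G y) *\<^sub>R \<xi>) c1 v1 \<longrightarrow>
            ode_sol (\<lambda>y. (1 / G y) *\<^sub>R \<xi>) c2 v2 \<longrightarrow>
            \<tau> > 0 \<longrightarrow> v2 \<tau> $ i - v1 \<tau> $ i \<le> C0)
       \<and> (\<exists>C>0. \<exists>fbar :: real^'n. \<forall>\<epsilon> c u t i.
            \<epsilon> > 0 \<longrightarrow> t > 0 \<longrightarrow>
            ode_sol (\<lambda>y. (1 / G ((1 / \<epsilon>) *\<^sub>R y)) *\<^sub>R \<xi>) c u \<longrightarrow>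
            \<bar>u t $ i - (c $ i + fbar $ i * t)\<bar> \<le> C * \<epsilon>)"
proof -
  have xi0: "\<xi> \<noteq> 0"
  proof
    assume x0: "\<xi> = 0"
    obtain j :: 'n where True by blast
    have "int_vec (axis j 1 :: real^'n)" by (rule int_vec_axis)
    moreover have "(axis j 1 :: real^'n) \<noteq> 0" by (simp add: axis_eq_0_iff)
    ultimately have "\<bar>\<xi> \<bullet> axis j 1\<bar> \<ge> C\<^sub>\<xi> * norm (axis j 1 :: real^'n) powr (- (real CARD('n) + \<sigma>))"
      by (rule dioph)
    then show False using x0 C\<xi>_pos by simp
  qed
  have cont: "continuous_on UNIV G" by (rule cont_diff_cont[OF G_Cm])
  obtain K where K: "\<And>c Lg. 0 \<le> Lg \<Longrightarrow> \<bar>integral {0..Lg} (\<lambda>r. G (c + r *\<^sub>R \<xi>)) - integral (cbox 0 1) G * Lg\<bar> \<le> K"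
    using key_bound[OF C\<xi>_pos \<sigma>_pos dioph G_Cm m_big G_per] by blast
  define Gb where "Gb = integral (cbox 0 1) G"
  have K0: "K \<ge> 0" using K[of 0 0] by simp
  have Gb0: "Gb > 0"
  proof -
    have "cbox 0 (1::real^'n) \<noteq> {}" by (auto simp: mem_box_cart set_eq_iff intro!: exI[of _ 0])
    then obtain x0 where x0: "x0 \<in> cbox 0 (1::real^'n)" "\<And>y. y \<in> cbox 0 1 \<Longrightarrow> G x0 \<le> G y"
      using continuous_attains_inf[OF compact_cbox _ continuous_on_subset[OF cont]] by blast
    have "integral (cbox 0 1) (\<lambda>x::real^'n. G x0) \<le> Gb" unfolding Gb_def
      by (rule integral_le) (auto intro!: integrable_continuous continuous_on_subset[OF cont] x0(2))
    moreover have "integral (cbox 0 1) (\<lambda>x::real^'n. G x0) = G x0" by (simp add: content_cube)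
    ultimately show ?thesis using G_pos[of x0] by simp
  qed
  have sol: "\<exists>s. v t = c + s *\<^sub>R \<xi> \<and> \<bar>t - Gb * s\<bar> \<le> K"
    if v: "ode_sol (\<lambda>y. (1 / G y) *\<^sub>R \<xi>) c v" and t: "t \<ge> 0" for c v t
  proof -
    obtain s where vs: "\<And>t. t \<ge> 0 \<Longrightarrow> v t = c + s t *\<^sub>R \<xi>" and s0: "s 0 = 0"
      and sd: "\<And>t. t \<ge> 0 \<Longrightarrow> (s has_real_derivative 1 / G (c + s t *\<^sub>R \<xi>)) (at t within {0..})"
      using ode_line[OF G_pos xi0 v] by blast
    have cg: "continuous_on UNIV (\<lambda>r. G (c + r *\<^sub>R \<xi>))"
      by (intro continuous_on_compose2[OF cont]) (auto intro!: continuous_intros)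
    have "s t \<ge> 0 \<and> integral {0..s t} (\<lambda>r. G (c + r *\<^sub>R \<xi>)) = t"
      by (rule ode_time[OF cg G_pos s0 sd t])
    then have "\<bar>t - Gb * s t\<bar> \<le> K" using K[of "s t" c] by (simp add: Gb_def mult.commute)
    then show ?thesis using vs[OF t] by blast
  qed
  have part1: "\<exists>C0>0. \<forall>c1 c2 v1 v2 \<tau> i.
            (\<forall>j. c1 $ j - c2 $ j \<in> {0..1}) \<longrightarrow>
            ode_sol (\<lambda>y. (1 / G y) *\<^sub>R \<xi>) c1 v1 \<longrightarrow>
            ode_sol (\<lambda>y. (1 / G y) *\<^sub>R \<xi>) c2 v2 \<longrightarrow>
            \<tau> > 0 \<longrightarrow> v2 \<tau> $ i - v1 \<tau> $ i \<le> C0"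
  proof (intro exI[of _ "2 * K * norm \<xi> / Gb + 1"] conjI allI impI)
    show "0 < 2 * K * norm \<xi> / Gb + 1" using K0 Gb0 by (simp add: add_nonneg_pos)
    fix c1 c2 :: "real^'n" and v1 v2 :: "real \<Rightarrow> real^'n" and \<tau> :: real and i :: 'n
    assume c: "\<forall>j. c1 $ j - c2 $ j \<in> {0..1}" and v1: "ode_sol (\<lambda>y. (1 / G y) *\<^sub>R \<xi>) c1 v1"
      and v2: "ode_sol (\<lambda>y. (1 / G y) *\<^sub>R \<xi>) c2 v2" and \<tau>: "\<tau> > 0"
    have "\<exists>s. v1 \<tau> = c1 + s *\<^sub>R \<xi> \<and> \<bar>\<tau> - Gb * s\<bar> \<le> K" using sol[OF v1, of \<tau>] \<tau> by simp
    then obtain s1 where s1: "v1 \<tau> = c1 + s1 *\<^sub>R \<xi>" "\<bar>\<tau> - Gb * s1\<bar> \<le> K" by blast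
    have "\<exists>s. v2 \<tau> = c2 + s *\<^sub>R \<xi> \<and> \<bar>\<tau> - Gb * s\<bar> \<le> K" using sol[OF v2, of \<tau>] \<tau> by simp
    then obtain s2 where s2: "v2 \<tau> = c2 + s2 *\<^sub>R \<xi>" "\<bar>\<tau> - Gb * s2\<bar> \<le> K" by blast
    have ci: "c2 $ i - c1 $ i \<le> 0" using c by auto
    have "\<bar>Gb * s2 - Gb * s1\<bar> \<le> 2 * K" using s1(2) s2(2) by linarith
    moreover have "\<bar>Gb * s2 - Gb * s1\<bar> = \<bar>Gb\<bar> * \<bar>s2 - s1\<bar>" by (simp add: abs_mult[symmetric] algebra_simps)
    then have "Gb * \<bar>s2 - s1\<bar> = \<bar>Gb * s2 - Gb * s1\<bar>" using Gb0 by simp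
    ultimately have "Gb * \<bar>s2 - s1\<bar> \<le> 2 * K" by simp
    then have ds: "\<bar>s2 - s1\<bar> \<le> 2 * K / Gb" using Gb0 by (simp add: field_simps)
    have "(s2 - s1) * \<xi> $ i \<le> \<bar>s2 - s1\<bar> * \<bar>\<xi> $ i\<bar>" by (metis abs_ge_self abs_mult)
    also have "\<dots> \<le> (2 * K / Gb) * norm \<xi>"
      using ds component_le_norm_cart[of \<xi> i] by (intro mult_mono) auto
    finally have "(s2 - s1) * \<xi> $ i \<le> 2 * K * norm \<xi> / Gb" by simp
    moreover have "v2 \<tau> $ i - v1 \<tau> $ i = (c2 $ i - c1 $ i) + (s2 - s1) * \<xi> $ i"
      using s1(1) s2(1) by (simp add: algebra_simps)
    ultimately show "v2 \<tau> $ i - v1 \<tau> $ i \<le> 2 * K * norm \<xi> / Gb + 1" using ci by linarith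
  qed
  have part2: "\<exists>C>0. \<exists>fbar :: real^'n. \<forall>\<epsilon> c u t i.
            \<epsilon> > 0 \<longrightarrow> t > 0 \<longrightarrow>
            ode_sol (\<lambda>y. (1 / G ((1 / \<epsilon>) *\<^sub>R y)) *\<^sub>R \<xi>) c u \<longrightarrow>
            \<bar>u t $ i - (c $ i + fbar $ i * t)\<bar> \<le> C * \<epsilon>"
  proof (intro exI[of _ "K * norm \<xi> / Gb + 1"] conjI exI[of _ "(1 / Gb) *\<^sub>R \<xi>"] allI impI)
    show "0 < K * norm \<xi> / Gb + 1" using K0 Gb0 by (simp add: add_nonneg_pos)
    fix \<epsilon> t :: real and c :: "real^'n" and u :: "real \<Rightarrow> real^'n" and i :: 'n
    assume e: "\<epsilon> > 0" and t: "t > 0" and u: "ode_sol (\<lambda>y. (1 / G ((1 / \<epsilon>) *\<^sub>R y)) *\<^sub>R \<xi>) c u"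
    define w where "w \<tau> = (1 / \<epsilon>) *\<^sub>R u (\<epsilon> * \<tau>)" for \<tau>
    have w: "ode_sol (\<lambda>y. (1 / G y) *\<^sub>R \<xi>) ((1 / \<epsilon>) *\<^sub>R c) w"
      unfolding ode_sol_def
    proof (intro conjI allI impI)
      show "w 0 = (1 / \<epsilon>) *\<^sub>R c" using u by (simp add: w_def ode_sol_def)
      fix \<tau> :: real assume \<tau>: "0 \<le> \<tau>"
      have ud: "(u has_vector_derivative (1 / G ((1 / \<epsilon>) *\<^sub>R u (\<epsilon> * \<tau>))) *\<^sub>R \<xi>) (at (\<epsilon> * \<tau>) within {0..})"
        using u \<tau> e unfolding ode_sol_def by simp
      have im: "(\<lambda>\<tau>. \<epsilon> * \<tau>) ` {0..} = {0..}"
      proof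
        show "{0..} \<subseteq> (\<lambda>\<tau>. \<epsilon> * \<tau>) ` {0..}"
        proof
          fix y :: real assume "y \<in> {0..}"
          then show "y \<in> (\<lambda>\<tau>. \<epsilon> * \<tau>) ` {0..}" using e by (intro image_eqI[of _ _ "y / \<epsilon>"]) auto
        qed
      qed (use e in auto)
      have ld: "((\<lambda>\<tau>. \<epsilon> * \<tau>) has_vector_derivative \<epsilon>) (at \<tau> within {0..})"
        by (auto intro!: derivative_eq_intros simp: has_real_derivative_iff_has_vector_derivative[symmetric])
      have "((u \<circ> (\<lambda>\<tau>. \<epsilon> * \<tau>)) has_vector_derivative \<epsilon> *\<^sub>R ((1 / G ((1 / \<epsilon>) *\<^sub>R u (\<epsilon> * \<tau>))) *\<^sub>R \<xi>)) (at \<tau> within {0..})"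
        by (rule vector_diff_chain_within[OF ld]) (use ud im in \<open>simp only:\<close>)
      then have d1: "((\<lambda>x. u (\<epsilon> * x)) has_vector_derivative \<epsilon> *\<^sub>R ((1 / G ((1 / \<epsilon>) *\<^sub>R u (\<epsilon> * \<tau>))) *\<^sub>R \<xi>)) (at \<tau> within {0..})"
        unfolding comp_def .
      have "((\<lambda>\<tau>. (1 / \<epsilon>) *\<^sub>R u (\<epsilon> * \<tau>)) has_vector_derivative
            (1 / \<epsilon>) *\<^sub>R (\<epsilon> *\<^sub>R ((1 / G ((1 / \<epsilon>) *\<^sub>R u (\<epsilon> * \<tau>))) *\<^sub>R \<xi>)) + 0 *\<^sub>R u (\<epsilon> * \<tau>)) (at \<tau> within {0..})"
        by (rule has_vector_derivative_scaleR[OF _ d1]) (auto intro!: derivative_eq_intros)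
      then show "(w has_vector_derivative (1 / G (w \<tau>)) *\<^sub>R \<xi>) (at \<tau> within {0..})"
        using e by (simp add: w_def[abs_def] o_def)
    qed
    obtain s where s: "w (t / \<epsilon>) = (1 / \<epsilon>) *\<^sub>R c + s *\<^sub>R \<xi>" "\<bar>t / \<epsilon> - Gb * s\<bar> \<le> K"
      using sol[OF w, of "t / \<epsilon>"] t e by auto
    have ut: "u t = c + (\<epsilon> * s) *\<^sub>R \<xi>"
    proof -
      have "u t = \<epsilon> *\<^sub>R w (t / \<epsilon>)" using e by (simp add: w_def)
      also have "\<dots> = c + (\<epsilon> * s) *\<^sub>R \<xi>" using e unfolding s(1) by (simp add: algebra_simps)
      finally show ?thesis .
    qed
    have "u t $ i - (c $ i + ((1 / Gb) *\<^sub>R \<xi>) $ i * t) = \<xi> $ i * \<epsilon> * ((Gb * s - t / \<epsilon>) / Gb)"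
      unfolding ut using e Gb0 by (simp add: field_simps)
    then have "\<bar>u t $ i - (c $ i + ((1 / Gb) *\<^sub>R \<xi>) $ i * t)\<bar> = \<bar>\<xi> $ i\<bar> * \<epsilon> * (\<bar>t / \<epsilon> - Gb * s\<bar> / Gb)"
      using e Gb0 by (simp add: abs_mult abs_minus_commute)
    also have "\<dots> \<le> norm \<xi> * \<epsilon> * (K / Gb)"
      using e Gb0 s(2) component_le_norm_cart[of \<xi> i]
      by (intro mult_mono divide_right_mono) auto
    also have "\<dots> \<le> (K * norm \<xi> / Gb + 1) * \<epsilon>" using e by (simp add: field_simps)
    finally show "\<bar>u t $ i - (c $ i + ((1 / Gb) *\<^sub>R \<xi>) $ i * t)\<bar> \<le> (K * norm \<xi> / Gb + 1) * \<epsilon>" .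
  qed
  show ?thesis using part1 part2 by blast
qed


end
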